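(* Let $d\ge 1$ be an integer and $\vec\gamma=(\gamma_1,\dots,\gamma_d)\in\mathbb{C}^d$. Let $g\colon\mathbb{C}\to\mathbb{C}$ be holomorphic with a simple zero $\alpha\neq 0$, with expansion $g(z)=\sum_{k\ge 1}c_k(z-\alpha)^k$ about $\alpha$, where $c_1\neq 0$; fix a point of $L$ lying over $\alpha$, also denoted $\alpha$. For $\vec a=(a_1,\dots,a_d)\in\mathbb{C}^d$ let $f(z;\vec a)=g(z)+\sum_{i=1}^d a_i z^{\gamma_i}$ for $z\in L$ (with $g(z)$ meaning $g(z^1)$ near $\alpha$). Suppose that for some neighborhood $U\subset\mathbb{C}^d$ of $\vec 0$ there is a smooth map $\phi\colon U\to L$ with $f(\phi(\vec a);\vec a)=0$ for all $\vec a\in U$ and $\phi(\vec 0)=\alpha$. Then for every ordered multiset $I=(I(1),\dots,I(N))$ of $[1,d]$ with $N=|I|\ge 1$, \[ \partial(\phi,I)=F\Big(\sum_{m\in I}\gamma_m,\ |I|-1,\ 1\Big), \] where $\partial(\phi,I)=\Big(\prod_{i=1}^{N}\frac{\partial}{\partial a_{I(i)}}\Big)\phi(\vec a)\big|_{\vec a=\vec 0}$ and $F$ is the function defined in the context.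
   Context: $L$ is the Riemann surface of the logarithm, parametrized by triples $(r,\theta,n)$ with $r>0$, $\theta\in(-\pi,\pi]$, $n\in\mathbb{Z}$; for $z=(r,\theta,n)\in L$ and $\gamma\in\mathbb{C}$, $z^\gamma=e^{\gamma\ln r+i\gamma\theta+2\pi i n\gamma}$. Derivatives of $\phi$ are taken in the local complex coordinate $z\mapsto z^1$ near $\alpha$. An ordered multiset of $[1,d]$ of order $N$ is an $N$-tuple $(I(1),\dots,I(N))$ with $1\le I(i)\le d$, and $\sum_{m\in I}\gamma_m=\sum_{i=1}^N\gamma_{I(i)}$. For an integer $r\ge 0$, $C(r)$ is the set of sequences $\mu=(\mu_i)_{i\ge 1}$ of nonnegative integers, eventually zero, with $\sum_{i\ge1}\mu_i=r$. For $x\in\mathbb{C}$ and integer $n$, $\binom{x}{n}=\frac{x(x-1)\cdots(x-n+1)}{n!}$ for $n\ge 0$ and $\binom{x}{n}=0$ for $n<0$. For $x\in\mathbb{C}$ and integers $r\ge 0$, $a\ge 1$, define \[ F(x,r,a)=\frac{-\alpha^{x}}{(a-1)!}\sum_{\mu\in C(r)}(-1)^{\mu_1}\binom{x}{\,r-\sum_{i\ge2}(i-1)\mu_i-(a-1)\,}\Big(r+\sum_{i\ge2}\mu_i\Big)!\,\frac{\alpha^{-(r-\sum_{i\ge2}(i-1)\mu_i-(a-1))}}{c_1^{\,r+1+\sum_{i\ge2}\mu_i}}\prod_{i\ge2}\frac{c_i^{\mu_i}}{\mu_i!}, \] where powers of $\alpha$ are taken in the sense of $L$. *)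

theory Defs
  imports "HOL-Analysis.Analysis"
begin

text \<open>Points of the Riemann surface L of the logarithm: triples (r, theta, n)
  with r > 0, -pi < theta \<le> pi, n an integer.\<close>
type_synonym Lpt = "real \<times> real \<times> int"

definition in_L :: "Lpt \<Rightarrow> bool" where
  "in_L z \<longleftrightarrow> (case z of (r, \<theta>, n) \<Rightarrow> r > 0 \<and> - pi < \<theta> \<and> \<theta> \<le> pi)"

definition Lpow :: "Lpt \<Rightarrow> complex \<Rightarrow> complex" where
  "Lpow z \<gamma> = (case z of (r, \<theta>, n) \<Rightarrow>
      exp (\<gamma> * of_real (ln r) + \<i> * \<gamma> * of_real \<theta> + 2 * of_real pi * \<i> * of_int n * \<gamma>))"

text \<open>Global (logarithmic) coordinate on L, a homeomorphism L \<rightarrow> C and a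
  holomorphic chart compatible with the local charts z \<mapsto> z^1.\<close>
definition Llog :: "Lpt \<Rightarrow> complex" where
  "Llog z = (case z of (r, \<theta>, n) \<Rightarrow>
      of_real (ln r) + \<i> * (of_real \<theta> + 2 * of_real pi * of_int n))"

definition pdiff :: "'d::finite \<Rightarrow> (complex^'d \<Rightarrow> complex) \<Rightarrow> complex^'d \<Rightarrow> complex" where
  "pdiff i h a = deriv (\<lambda>t. h (a + axis i t)) 0"

fun iter_pdiff :: "'d::finite list \<Rightarrow> (complex^'d \<Rightarrow> complex) \<Rightarrow> complex^'d \<Rightarrow> complex" where
  "iter_pdiff [] h = h"
| "iter_pdiff (i # is) h = pdiff i (iter_pdiff is h)"

definition gbinom :: "complex \<Rightarrow> int \<Rightarrow> complex" where
  "gbinom x n = (if n < 0 then 0 else x gchoose (nat n))"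

text \<open>C(r): sequences (mu_i)_{i \<ge> 1} of nonnegative integers, eventually zero,
  summing to r. Represented as nat \<Rightarrow> nat with the unused entry mu 0 = 0.\<close>
definition Cseq :: "nat \<Rightarrow> (nat \<Rightarrow> nat) set" where
  "Cseq r = {\<mu>. \<mu> 0 = 0 \<and> finite {i. \<mu> i \<noteq> 0} \<and> (\<Sum>i\<in>{i. \<mu> i \<noteq> 0}. \<mu> i) = r}"

definition supp2 :: "(nat \<Rightarrow> nat) \<Rightarrow> nat set" where
  "supp2 \<mu> = {i. 2 \<le> i \<and> \<mu> i \<noteq> 0}"

text \<open>The function F(x, r, a); alpha is the chosen point of L, c the Taylor coefficients.\<close>
definition Ffun :: "Lpt \<Rightarrow> (nat \<Rightarrow> complex) \<Rightarrow> complex \<Rightarrow> nat \<Rightarrow> nat \<Rightarrow> complex" where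
  "Ffun \<alpha> c x r a =
     - Lpow \<alpha> x / of_nat (fact (a - 1)) *
     (\<Sum>\<^sub>\<infinity>\<mu>\<in>Cseq r.
        (let s1 = (\<Sum>i\<in>supp2 \<mu>. (i - 1) * \<mu> i);
             s2 = (\<Sum>i\<in>supp2 \<mu>. \<mu> i);
             k = int r - int s1 - (int a - 1)
         in (-1) ^ (\<mu> 1) * gbinom x k * of_nat (fact (r + s2)) *
            Lpow \<alpha> (- of_int k) / c 1 ^ (r + 1 + s2) *
            (\<Prod>i\<in>supp2 \<mu>. c i ^ \<mu> i / of_nat (fact (\<mu> i)))))"

end

theory Submission
  imports Defs "HOL-Complex_Analysis.Complex_Analysis" "HOL-Combinatorics.Multiset_Permutations"
begin

definition Dop :: "(complex \<Rightarrow> complex) \<Rightarrow> (complex \<Rightarrow> complex) \<Rightarrow> complex \<Rightarrow> complex" where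
  "Dop Q X = (\<lambda>v. deriv X v / Q v)"

fun pc :: "(complex\<Rightarrow>complex) \<Rightarrow> (complex\<Rightarrow>complex) \<Rightarrow> (complex\<Rightarrow>complex) \<Rightarrow> nat \<Rightarrow> nat \<Rightarrow> complex \<Rightarrow> complex" where
  "pc q P K 0 j = (if j = 0 then K else (\<lambda>v. 0))"
| "pc q P K (Suc m) j = (\<lambda>v. deriv (pc q P K m j) v * q v
      - (if j = 0 then 0 else deriv (pc q P K m (j-1)) v * deriv P v)
      - of_nat (2*m+1) * (pc q P K m j v * deriv q v
            - (if j = 0 then 0 else pc q P K m (j-1) v * deriv (deriv P) v)))"

lemma pc_hol:
  assumes "open B" "q holomorphic_on B" "P holomorphic_on B" "K holomorphic_on B"
  shows "pc q P K m j holomorphic_on B"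
  using assms
proof (induction m arbitrary: j)
  case 0
  then show ?case by auto
next
  case (Suc m)
  have h: "\<And>j. pc q P K m j holomorphic_on B" using Suc by blast
  have h': "\<And>j. deriv (pc q P K m j) holomorphic_on B" using h assms(1) by (auto intro: holomorphic_deriv)
  have dP: "deriv P holomorphic_on B" "deriv (deriv P) holomorphic_on B" "deriv q holomorphic_on B"
    using assms by (auto intro!: holomorphic_deriv)
  show ?case
  proof (cases "j = 0")
    case True then show ?thesis using h h' dP assms by (auto intro!: holomorphic_intros)
  next
    case False then show ?thesis using h h' dP assms by (auto intro!: holomorphic_intros)
  qed
qed

lemma pc_zero: "m < j \<Longrightarrow> pc q P K m j = (\<lambda>v. 0)"
proof (induction m arbitrary: j)
  case 0
  then show ?case by auto
next
  case (Suc m)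
  from Suc.prems obtain j' where j: "j = Suc j'" by (cases j) auto
  have e: "pc q P K m (Suc j') = (\<lambda>v. 0)" "pc q P K m j' = (\<lambda>v. 0)" using Suc j by auto
  show ?case using Suc.prems by (simp add: e j fun_eq_iff)
qed

definition Nf :: "(complex\<Rightarrow>complex) \<Rightarrow> (complex\<Rightarrow>complex) \<Rightarrow> (complex\<Rightarrow>complex) \<Rightarrow> nat \<Rightarrow> complex \<Rightarrow> complex \<Rightarrow> complex" where
  "Nf q P K m s v = (\<Sum>j\<le>m. s^j * pc q P K m j v)"

definition dNf :: "(complex\<Rightarrow>complex) \<Rightarrow> (complex\<Rightarrow>complex) \<Rightarrow> (complex\<Rightarrow>complex) \<Rightarrow> nat \<Rightarrow> complex \<Rightarrow> complex \<Rightarrow> complex" where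
  "dNf q P K m s v = (\<Sum>j\<le>m. s^j * deriv (pc q P K m j) v)"

lemma sum_shift_aux:
  fixes f :: "nat \<Rightarrow> complex"
  shows "(\<Sum>j\<le>Suc m. s^j * (if j = 0 then 0 else f (j-1))) = s * (\<Sum>j\<le>m. s^j * f j)"
  by (subst sum.atMost_Suc_shift) (simp add: sum_distrib_left mult_ac)

lemma poly_step:
  fixes a b :: "nat \<Rightarrow> complex"
  assumes "a (Suc m) = 0" "b (Suc m) = 0"
  shows "(\<Sum>j\<le>Suc m. s^j * (a j * Q - (if j=0 then 0 else a (j-1) * P1)
            - M * (b j * Q1 - (if j=0 then 0 else b (j-1) * P2))))
         = (\<Sum>j\<le>m. s^j*a j)*(Q - s*P1) - M*(\<Sum> j\<le>m. s^j*b j)*(Q1 - s*P2)"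
proof -
  have "(\<Sum>j\<le>Suc m. s^j * (a j * Q - (if j=0 then 0 else a (j-1) * P1)
            - M * (b j * Q1 - (if j=0 then 0 else b (j-1) * P2))))
     = (\<Sum>j\<le>Suc m. s^j * a j) * Q - (\<Sum>j\<le>Suc m. s^j * (if j=0 then 0 else a (j-1))) * P1
       - M * ((\<Sum>j\<le>Suc m. s^j * b j) * Q1 - (\<Sum>j\<le>Suc m. s^j * (if j=0 then 0 else b (j-1))) * P2)"
  proof -
    have e: "\<And>j. s^j * (a j * Q - (if j=0 then 0 else a (j-1) * P1)
            - M * (b j * Q1 - (if j=0 then 0 else b (j-1) * P2)))
       = s^j * a j * Q - s^j * (if j=0 then 0 else a (j-1)) * P1
          - M * (s^j * b j * Q1 - s^j * (if j=0 then 0 else b (j-1)) * P2)"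
      by (case_tac j) (simp_all add: algebra_simps)
    show ?thesis unfolding e
      by (simp add: sum_subtractf sum_distrib_left sum_distrib_right right_diff_distrib
           left_diff_distrib del: sum.atMost_Suc)
  qed
  also have "\<dots> = (\<Sum>j\<le>m. s^j*a j)*(Q - s*P1) - M*(\<Sum> j\<le>m. s^j*b j)*(Q1 - s*P2)"
    unfolding sum_shift_aux using assms by (simp add: algebra_simps)
  finally show ?thesis .
qed

lemma Nf_Suc:
  "Nf q P K (Suc m) s v = dNf q P K m s v * (q v - s * deriv P v)
     - of_nat (2*m+1) * Nf q P K m s v * (deriv q v - s * deriv (deriv P) v)"
proof -
  have "Nf q P K (Suc m) s v = (\<Sum>j\<le>Suc m. s^j * ((\<lambda>j. deriv (pc q P K m j) v) j * q v
      - (if j = 0 then 0 else (\<lambda>j. deriv (pc q P K m j) v) (j-1) * deriv P v)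
      - of_nat (2*m+1) * ((\<lambda>j. pc q P K m j v) j * deriv q v
      - (if j = 0 then 0 else (\<lambda>j. pc q P K m j v) (j-1) * deriv (deriv P) v))))"
    by (simp add: Nf_def)
  also have "\<dots> = dNf q P K m s v * (q v - s * deriv P v)
     - of_nat (2*m+1) * Nf q P K m s v * (deriv q v - s * deriv (deriv P) v)"
    unfolding Nf_def dNf_def
    by (rule poly_step) (simp_all add: pc_zero)
  finally show ?thesis .
qed

lemma hol_D:
  assumes "open B" "f holomorphic_on B" "v \<in> B"
  shows "(f has_field_derivative deriv f v) (at v)"
  using holomorphic_derivI[OF assms(2) assms(1) assms(3)] .

lemma Nf_deriv:
  assumes "open B" "q holomorphic_on B" "P holomorphic_on B" "K holomorphic_on B" "v \<in> B"
  shows "((\<lambda>v. Nf q P K m s v) has_field_derivative dNf q P K m s v) (at v)"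
  unfolding Nf_def dNf_def
  by (auto intro!: derivative_eq_intros hol_D[OF assms(1) pc_hol[OF assms(1-4)] assms(5)] simp: mult.commute)

lemma open_nz:
  assumes "open B" "f holomorphic_on B"
  shows "open {v\<in>B. f v \<noteq> 0}"
proof -
  have "continuous_on B f" using assms holomorphic_on_imp_continuous_on by blast
  have "open (B \<inter> f -` (-{0}))" by (rule continuous_open_preimage[OF \<open>continuous_on B f\<close> assms(1)]) auto
  moreover have "B \<inter> f -` (-{0}) = {v\<in>B. f v \<noteq> 0}" by auto
  ultimately show ?thesis by simp
qed

lemma poly_form:
  assumes B: "open B" "q holomorphic_on B" "P holomorphic_on B" "K holomorphic_on B"
  shows "v \<in> B \<Longrightarrow> q v - s * deriv P v \<noteq> 0 \<Longrightarrow>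
    (Dop (\<lambda>v. q v - s * deriv P v) ^^ m) (\<lambda>v. K v / (q v - s * deriv P v)) v
      = Nf q P K m s v / (q v - s * deriv P v) ^ (2*m+1)"
proof (induction m arbitrary: v)
  case 0
  then show ?case by (simp add: Nf_def)
next
  case (Suc m)
  define Q where "Q = (\<lambda>v. q v - s * deriv P v)"
  have Qh: "Q holomorphic_on B" unfolding Q_def using B by (auto intro!: holomorphic_intros)
  define W where "W = {v\<in>B. Q v \<noteq> 0}"
  have W: "open W" unfolding W_def by (rule open_nz[OF B(1) Qh])
  have vW: "v \<in> W" using Suc.prems by (simp add: W_def Q_def)
  have ev: "eventually (\<lambda>v. (Dop Q ^^ m) (\<lambda>v. K v / Q v) v = Nf q P K m s v / Q v ^ (2*m+1)) (nhds v)"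
    using eventually_nhds_in_open[OF W vW]
    by eventually_elim (use Suc.IH in \<open>auto simp: W_def Q_def\<close>)
  have dQ: "(Q has_field_derivative (deriv q v - s * deriv (deriv P) v)) (at v)"
    unfolding Q_def using B Suc.prems
    by (auto intro!: derivative_eq_intros hol_D holomorphic_deriv)
  have dN: "((\<lambda>v. Nf q P K m s v) has_field_derivative dNf q P K m s v) (at v)"
    using Nf_deriv[OF B Suc.prems(1)] .
  have Qv: "Q v \<noteq> 0" using vW W_def by auto
  have D: "((\<lambda>v. Nf q P K m s v / Q v ^ (2*m+1)) has_field_derivative
      (dNf q P K m s v * Q v ^ (2*m+1) - Nf q P K m s v * (of_nat (2*m+1) * (deriv q v - s * deriv (deriv P) v) * Q v ^ (2*m)))
        / (Q v ^ (2*m+1) * Q v ^ (2*m+1))) (at v)"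
    using DERIV_divide[OF dN DERIV_power[OF dQ, of "2*m+1"]] Qv by (simp add: mult.assoc)
  have "(Dop Q ^^ Suc m) (\<lambda>v. K v / Q v) v = deriv ((Dop Q ^^ m) (\<lambda>v. K v / Q v)) v / Q v"
    by (simp add: Dop_def)
  also have "deriv ((Dop Q ^^ m) (\<lambda>v. K v / Q v)) v = deriv (\<lambda>v. Nf q P K m s v / Q v ^ (2*m+1)) v"
    by (rule deriv_cong_ev[OF ev refl])
  also have "\<dots> = (dNf q P K m s v * Q v ^ (2*m+1) - Nf q P K m s v * (of_nat (2*m+1) * (deriv q v - s * deriv (deriv P) v) * Q v ^ (2*m)))
        / (Q v ^ (2*m+1) * Q v ^ (2*m+1))"
    by (rule DERIV_imp_deriv[OF D])
  also have "\<dots> / Q v = Nf q P K (Suc m) s v / Q v ^ (2 * Suc m + 1)"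
  proof -
    have Qe: "q v - s * deriv P v = Q v" by (simp add: Q_def)
    show ?thesis unfolding Nf_Suc Qe using Qv
      by (simp add: field_simps power2_eq_square)
  qed
  finally show ?case by (simp add: Q_def)
qed

lemma Dop_hol:
  assumes "open W" "q holomorphic_on W" "\<forall>v\<in>W. q v \<noteq> 0" "X holomorphic_on W"
  shows "(Dop q ^^ n) X holomorphic_on W"
proof (induction n)
  case 0 then show ?case using assms by simp
next
  case (Suc n)
  then show ?case using assms unfolding Dop_def
    by (auto intro!: holomorphic_intros)
qed

lemma Nf_zero: "Nf q P K m 0 v = pc q P K m 0 v"
  unfolding Nf_def by (simp add: power_0_left sum.atMost_shift)

lemma Z_form:
  assumes B: "open B" "q holomorphic_on B" "P holomorphic_on B" "K holomorphic_on B"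
    and "v \<in> B" "q v \<noteq> 0"
  shows "(Dop q ^^ m) (\<lambda>v. K v / q v) v = pc q P K m 0 v / q v ^ (2*m+1)"
  using poly_form[OF B, of v 0 m] assms(5,6) by (simp add: Nf_zero)

definition Yf :: "(complex\<Rightarrow>complex) \<Rightarrow> (complex\<Rightarrow>complex) \<Rightarrow> (complex\<Rightarrow>complex) \<Rightarrow> nat \<Rightarrow> complex \<Rightarrow> complex" where
  "Yf q P K m v = pc q P K m 1 v / q v ^ (2*m+1)
     + of_nat (2*m+1) * pc q P K m 0 v * deriv P v / q v ^ (2*m+2)"

lemma quot_pow_deriv:
  assumes "(f has_field_derivative D) (at v)" "(q has_field_derivative Dq) (at v)" "q v \<noteq> 0"
  shows "((\<lambda>v. f v / q v ^ n) has_field_derivative (D / q v ^ n - of_nat n * f v * Dq / q v ^ (n+1))) (at v)"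
proof -
  have "((\<lambda>v. f v / q v ^ n) has_field_derivative
     (D * q v ^ n - f v * (of_nat n * Dq * q v ^ (n - Suc 0))) / (q v ^ n * q v ^ n)) (at v)"
    using DERIV_divide[OF assms(1) DERIV_power[OF assms(2), of n]] assms(3) by (simp add: mult.assoc)
  moreover have "(D * q v ^ n - f v * (of_nat n * Dq * q v ^ (n - Suc 0))) / (q v ^ n * q v ^ n)
      = D / q v ^ n - of_nat n * f v * Dq / q v ^ (n+1)"
  proof (cases n)
    case 0 then show ?thesis using assms(3) by simp
  next
    case (Suc k)
    then show ?thesis using assms(3) by (simp add: field_simps)
  qed
  ultimately show ?thesis by simp
qed

lemma alg_Y:
  fixes q t P dP ddP dq az ao pz po dZ :: complex and M :: nat
  assumes "q \<noteq> 0" "t \<noteq> 0"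
  shows "(dP * ((az * q - of_nat M * (pz * dq)) / (t * q^2)) + dZ * P +
          (ao / t - of_nat M * po * dq / (t * q)
          + of_nat M * (az * dP + pz * ddP) / (t * q)
          - of_nat M * of_nat (M+1) * pz * dP * dq / (t * q^2))) / q
    = P * (dZ / q) + ((ao * q - az * dP - of_nat M * (po * dq - pz * ddP)) / (t * q^2)
        + of_nat (M+2) * (az * q - of_nat M * (pz * dq)) * dP / (t * q^3))"
  using assms by (simp add: field_simps power2_eq_square power3_eq_cube)

lemma Y_lemma:
  assumes B: "open B" "q holomorphic_on B" "P holomorphic_on B" "K holomorphic_on B"
  shows "v \<in> B \<Longrightarrow> q v \<noteq> 0 \<Longrightarrow>
    (Dop q ^^ Suc m) (\<lambda>v. P v * K v / q v) v
      = P v * (Dop q ^^ Suc m) (\<lambda>v. K v / q v) v + Yf q P K m v"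
proof (induction m arbitrary: v)
  case 0
  have dK: "((\<lambda>v. K v / q v) has_field_derivative deriv (\<lambda>v. K v / q v) v) (at v)"
    using B 0 by (intro hol_D[of "{v\<in>B. q v \<noteq> 0}"]) (auto intro!: holomorphic_intros open_nz)
  have dP: "(P has_field_derivative deriv P v) (at v)" using B 0 by (intro hol_D) auto
  have "deriv (\<lambda>v. P v * K v / q v) v = deriv (\<lambda>v. P v * (K v / q v)) v"
    by (rule arg_cong[where f="\<lambda>f. deriv f v"]) (simp add: fun_eq_iff)
  also have "\<dots> = deriv P v * (K v / q v) + deriv (\<lambda>v. K v / q v) v * P v"
    by (rule DERIV_imp_deriv[OF DERIV_mult[OF dP dK]])
  finally have "deriv (\<lambda>v. P v * K v / q v) v = deriv P v * (K v / q v) + P v * deriv (\<lambda>v. K v / q v) v"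
    by simp
  then show ?case using 0 by (simp add: Dop_def Yf_def field_simps power2_eq_square)
next
  case (Suc m)
  define W where "W = {v\<in>B. q v \<noteq> 0}"
  have W: "open W" unfolding W_def by (rule open_nz[OF B(1,2)])
  have vW: "v \<in> W" using Suc.prems by (simp add: W_def)
  define Zs where "Zs = (Dop q ^^ Suc m) (\<lambda>v. K v / q v)"
  have Zh: "Zs holomorphic_on W" unfolding Zs_def
  proof (rule Dop_hol[OF W])
    have WB: "W \<subseteq> B" by (auto simp: W_def)
    show "q holomorphic_on W" using B(2) WB by (rule holomorphic_on_subset)
    show "\<forall>v\<in>W. q v \<noteq> 0" by (auto simp: W_def)
    show "(\<lambda>v. K v / q v) holomorphic_on W" using holomorphic_on_subset[OF B(4) WB] \<open>q holomorphic_on W\<close>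
      by (auto intro!: holomorphic_intros simp: W_def)
  qed
  have ev: "eventually (\<lambda>v. (Dop q ^^ Suc m) (\<lambda>v. P v * K v / q v) v = P v * Zs v + Yf q P K m v) (nhds v)"
    using eventually_nhds_in_open[OF W vW]
    by eventually_elim (use Suc.IH in \<open>auto simp: W_def Zs_def\<close>)
  have hp: "\<And>j. pc q P K m j holomorphic_on B" using pc_hol[OF B] .
  have dp: "\<And>j. (pc q P K m j has_field_derivative deriv (pc q P K m j) v) (at v)"
    using hp B Suc.prems by (intro hol_D) auto
  have dP: "(P has_field_derivative deriv P v) (at v)" using B Suc.prems by (intro hol_D) auto
  have dP': "(deriv P has_field_derivative deriv (deriv P) v) (at v)" using B Suc.prems
    by (intro hol_D[of B]) (auto intro!: holomorphic_deriv)
  have dq: "(q has_field_derivative deriv q v) (at v)" using B Suc.prems by (intro hol_D) auto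
  have dZ: "(Zs has_field_derivative deriv Zs v) (at v)" using Zh W vW by (intro hol_D) auto
  define M where "M = 2 * m + 1"
  have qv: "q v \<noteq> 0" using Suc.prems by auto
  define t where "t = q v ^ M"
  have t: "t \<noteq> 0" using qv by (simp add: t_def)
  define a0 where "a0 = deriv (pc q P K m 0) v"
  define a1 where "a1 = deriv (pc q P K m 1) v"
  define p0 where "p0 = pc q P K m 0 v"
  define p1 where "p1 = pc q P K m 1 v"
  have dN: "((\<lambda>v. of_nat M * pc q P K m 0 v * deriv P v) has_field_derivative
      of_nat M * (a0 * deriv P v + p0 * deriv (deriv P) v)) (at v)"
    unfolding a0_def p0_def
    by (auto intro!: derivative_eq_intros dp dP' simp: algebra_simps)
  have e: "Yf q P K m = (\<lambda>v. pc q P K m 1 v / q v ^ M + (of_nat M * pc q P K m 0 v * deriv P v) / q v ^ (M+1))"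
    by (simp add: Yf_def M_def fun_eq_iff)
  have dY: "(Yf q P K m has_field_derivative
      (a1 / q v ^ M - of_nat M * p1 * deriv q v / q v ^ (M+1))
      + (of_nat M * (a0 * deriv P v + p0 * deriv (deriv P) v) / q v ^ (M+1)
        - of_nat (M+1) * (of_nat M * p0 * deriv P v) * deriv q v / q v ^ (M+1+1))) (at v)"
    unfolding e a1_def p1_def p0_def
    by (rule DERIV_add[OF quot_pow_deriv[OF dp dq qv] quot_pow_deriv[OF dN[unfolded p0_def] dq qv]])
  have "(Dop q ^^ Suc (Suc m)) (\<lambda>v. P v * K v / q v) v
      = deriv ((Dop q ^^ Suc m) (\<lambda>v. P v * K v / q v)) v / q v"
    by (simp add: Dop_def)
  also have "deriv ((Dop q ^^ Suc m) (\<lambda>v. P v * K v / q v)) v = deriv (\<lambda>v. P v * Zs v + Yf q P K m v) v"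
    by (rule deriv_cong_ev[OF ev refl])
  also have "\<dots> = deriv P v * Zs v + deriv Zs v * P v + ((a1 / q v ^ M - of_nat M * p1 * deriv q v / q v ^ (M+1))
      + (of_nat M * (a0 * deriv P v + p0 * deriv (deriv P) v) / q v ^ (M+1)
        - of_nat (M+1) * (of_nat M * p0 * deriv P v) * deriv q v / q v ^ (M+1+1)))"
    by (rule DERIV_imp_deriv[OF DERIV_add[OF DERIV_mult[OF dP dZ] dY]])
  finally have L: "(Dop q ^^ Suc (Suc m)) (\<lambda>v. P v * K v / q v) v = \<dots> / q v" .
  have Zv: "Zs v = (a0 * q v - of_nat M * (p0 * deriv q v)) / (t * q v ^ 2)"
    unfolding Zs_def using Z_form[OF B Suc.prems, of "Suc m"]
    by (simp add: M_def t_def a0_def p0_def power_add power2_eq_square mult_ac)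
  have R: "(Dop q ^^ Suc (Suc m)) (\<lambda>v. K v / q v) v = deriv Zs v / q v"
    by (simp add: Dop_def Zs_def)
  have YS: "Yf q P K (Suc m) v = ((a1 * q v - a0 * deriv P v - of_nat M * (p1 * deriv q v - p0 * deriv (deriv P) v)) / (t * q v^2)
        + of_nat (M+2) * (a0 * q v - of_nat M * (p0 * deriv q v)) * deriv P v / (t * q v^3))"
    by (simp add: Yf_def M_def t_def a0_def a1_def p0_def p1_def power_add power2_eq_square power3_eq_cube mult_ac)
  have pw: "q v ^ M = t" "q v ^ (M+1) = t * q v" "q v ^ (M+1+1) = t * q v ^ 2"
    by (simp_all add: t_def power2_eq_square)
  show ?case unfolding L R Zv YS pw
    using alg_Y[OF qv t, where dP="deriv P v" and az=a0 and M=M and pz=p0 and dq="deriv q v" and dZ="deriv Zs v"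
       and P="P v" and ao=a1 and po=p1 and ddP="deriv (deriv P) v"]
    by (simp add: mult_ac add_diff_eq)
qed

lemma eventually_nhds_from_at:
  assumes "eventually P (at x)" "P x" shows "eventually P (nhds x)"
  using assms by (simp add: eventually_nhds_conv_at)

lemma sum_pow0a:
  fixes a :: "nat \<Rightarrow> complex"
  shows "(\<Sum>j\<le>m. of_nat j * 0 ^ (j - 1) * a j) = (if m = 0 then 0 else a 1)"
proof (induction m)
  case 0 then show ?case by simp
next
  case (Suc m) then show ?case by (cases m) auto
qed

lemma sum_pow0b:
  fixes b :: "nat \<Rightarrow> complex"
  shows "(\<Sum>j\<le>m. 0 ^ j * b j) = b 0"
  by (induction m) auto

lemma step_lemma:
  assumes B: "open B" "q holomorphic_on B" "P holomorphic_on B" "K holomorphic_on B"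
    and v0: "v0 \<in> B" "q v0 \<noteq> 0"
    and f: "(f has_field_derivative (P v0 / q v0)) (at 0)" "f 0 = v0"
  shows "((\<lambda>s. (Dop (\<lambda>v. q v - s * deriv P v) ^^ m) (\<lambda>v. K v / (q v - s * deriv P v)) (f s))
           has_field_derivative (Dop q ^^ Suc m) (\<lambda>v. P v * K v / q v) v0) (at 0)"
proof -
  define f' where "f' = P v0 / q v0"
  define M where "M = 2*m+1"
  define H where "H = (\<lambda>s. q (f s) - s * deriv P (f s))"
  have fc: "isCont f 0" using f(1) by (rule DERIV_isCont)
  have ft: "(f \<longlongrightarrow> v0) (at 0)" using fc f(2) by (simp add: isCont_def)
  have dq: "(q has_field_derivative deriv q v0) (at v0)" using B v0 by (intro hol_D) auto
  have dP: "(deriv P has_field_derivative deriv (deriv P) v0) (at v0)"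
    using B v0 by (intro hol_D[of B]) (auto intro!: holomorphic_deriv)
  have dp: "\<And>j. (pc q P K m j has_field_derivative deriv (pc q P K m j) v0) (at v0)"
    using B v0 pc_hol[OF B] by (intro hol_D) auto
  have dH: "(H has_field_derivative (deriv q v0 * f' - deriv P v0)) (at 0)"
  proof -
    have "(H has_field_derivative (deriv q (f 0) * f' - (1 * deriv P (f 0) + deriv (deriv P) (f 0) * f' * 0))) (at 0)"
      unfolding H_def f'_def
      by (intro DERIV_diff DERIV_chain2[OF dq[folded f(2)] f(1)] DERIV_mult DERIV_ident
            DERIV_chain2[OF dP[folded f(2)] f(1)])
    then show ?thesis using f(2) by simp
  qed
  have H0: "H 0 = q v0" using f(2) by (simp add: H_def)
  have Hc: "isCont H 0" using dH by (rule DERIV_isCont)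
  have ev1: "eventually (\<lambda>s. f s \<in> B) (at 0)" using topological_tendstoD[OF ft B(1) v0(1)] .
  have ev2: "eventually (\<lambda>s. H s \<noteq> 0) (at 0)"
    using topological_tendstoD[OF Hc[unfolded isCont_def H0], of "-{0}"] v0(2) by auto
  have ev: "eventually (\<lambda>s. f s \<in> B \<and> H s \<noteq> 0) (nhds 0)"
    by (rule eventually_nhds_from_at) (use ev1 ev2 f(2) H0 v0 in \<open>auto intro: eventually_conj\<close>)
  have ev': "eventually (\<lambda>s. (Dop (\<lambda>v. q v - s * deriv P v) ^^ m) (\<lambda>v. K v / (q v - s * deriv P v)) (f s)
      = Nf q P K m s (f s) / H s ^ M) (nhds 0)"
    using ev by eventually_elim (use poly_form[OF B] in \<open>auto simp: H_def M_def\<close>)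
  have dterm: "\<And>j. ((\<lambda>s. s^j * pc q P K m j (f s)) has_field_derivative
      (of_nat j * 0 ^ (j - 1) * pc q P K m j v0 + 0 ^ j * (deriv (pc q P K m j) v0 * f'))) (at 0)"
  proof -
    fix j
    have "((\<lambda>s. s^j * pc q P K m j (f s)) has_field_derivative
      (of_nat j * (1 * 0 ^ (j - Suc 0)) * pc q P K m j (f 0) + deriv (pc q P K m j) (f 0) * f' * 0 ^ j)) (at 0)"
      unfolding f'_def
      by (intro DERIV_mult DERIV_power[OF DERIV_ident] DERIV_chain2[OF dp[folded f(2)] f(1)])
    then show "((\<lambda>s. s^j * pc q P K m j (f s)) has_field_derivative
      (of_nat j * 0 ^ (j - 1) * pc q P K m j v0 + 0 ^ j * (deriv (pc q P K m j) v0 * f'))) (at 0)"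
      using f(2) by (simp add: mult_ac)
  qed
  have dN: "((\<lambda>s. Nf q P K m s (f s)) has_field_derivative
       (pc q P K m 1 v0 + deriv (pc q P K m 0) v0 * f')) (at 0)"
  proof -
    have "((\<lambda>s. Nf q P K m s (f s)) has_field_derivative
       (\<Sum>j\<le>m. of_nat j * 0 ^ (j - 1) * pc q P K m j v0 + 0 ^ j * (deriv (pc q P K m j) v0 * f'))) (at 0)"
      unfolding Nf_def by (rule DERIV_sum) (rule dterm)
    moreover have "(\<Sum>j\<le>m. of_nat j * 0 ^ (j - 1) * pc q P K m j v0 + 0 ^ j * (deriv (pc q P K m j) v0 * f'))
        = pc q P K m 1 v0 + deriv (pc q P K m 0) v0 * f'"
      unfolding sum.distrib sum_pow0a sum_pow0b using pc_zero[of 0 1 q P K] by auto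
    ultimately show ?thesis by simp
  qed
  have N0: "Nf q P K m 0 (f 0) = pc q P K m 0 v0" using f(2) by (simp add: Nf_zero)
  have dG: "((\<lambda>s. Nf q P K m s (f s) / H s ^ M) has_field_derivative
      ((pc q P K m 1 v0 + deriv (pc q P K m 0) v0 * f') / q v0 ^ M
        - of_nat M * pc q P K m 0 v0 * (deriv q v0 * f' - deriv P v0) / q v0 ^ (M+1))) (at 0)"
    using quot_pow_deriv[OF dN dH, of M] H0 N0 v0 by simp
  define W where "W = {v\<in>B. q v \<noteq> 0}"
  have W: "open W" unfolding W_def by (rule open_nz[OF B(1,2)])
  have vW: "v0 \<in> W" using v0 by (simp add: W_def)
  have evZ: "eventually (\<lambda>v. (Dop q ^^ m) (\<lambda>v. K v / q v) v = pc q P K m 0 v / q v ^ M) (nhds v0)"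
    using eventually_nhds_in_open[OF W vW]
    by eventually_elim (use Z_form[OF B] in \<open>auto simp: W_def M_def\<close>)
  have dZ: "((\<lambda>v. pc q P K m 0 v / q v ^ M) has_field_derivative
      (deriv (pc q P K m 0) v0 / q v0 ^ M - of_nat M * pc q P K m 0 v0 * deriv q v0 / q v0 ^ (M+1))) (at v0)"
    by (rule quot_pow_deriv[OF dp dq v0(2)])
  have "(Dop q ^^ Suc m) (\<lambda>v. P v * K v / q v) v0
      = P v0 * (Dop q ^^ Suc m) (\<lambda>v. K v / q v) v0 + Yf q P K m v0"
    by (rule Y_lemma[OF B v0])
  also have "(Dop q ^^ Suc m) (\<lambda>v. K v / q v) v0 = deriv ((Dop q ^^ m) (\<lambda>v. K v / q v)) v0 / q v0"
    by (simp add: Dop_def)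
  also have "deriv ((Dop q ^^ m) (\<lambda>v. K v / q v)) v0 = deriv (\<lambda>v. pc q P K m 0 v / q v ^ M) v0"
    by (rule deriv_cong_ev[OF evZ refl])
  also have "\<dots> = deriv (pc q P K m 0) v0 / q v0 ^ M - of_nat M * pc q P K m 0 v0 * deriv q v0 / q v0 ^ (M+1)"
    by (rule DERIV_imp_deriv[OF dZ])
  finally have T: "(Dop q ^^ Suc m) (\<lambda>v. P v * K v / q v) v0 =
      P v0 * ((deriv (pc q P K m 0) v0 / q v0 ^ M - of_nat M * pc q P K m 0 v0 * deriv q v0 / q v0 ^ (M+1)) / q v0)
      + Yf q P K m v0" .
  have alg: "((pc q P K m 1 v0 + deriv (pc q P K m 0) v0 * f') / q v0 ^ M
        - of_nat M * pc q P K m 0 v0 * (deriv q v0 * f' - deriv P v0) / q v0 ^ (M+1))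
      = (Dop q ^^ Suc m) (\<lambda>v. P v * K v / q v) v0"
    unfolding T Yf_def f'_def M_def[symmetric] using v0(2)
    by (simp add: field_simps M_def)
  show ?thesis
    using DERIV_cong_ev[OF refl ev' refl] dG alg by simp
qed


lemma axis_zero0 [simp]: "axis j (0::complex) = (0::complex^'d::finite)"
  by (simp add: axis_def vec_eq_iff)

lemma ev_axis:
  fixes a :: "complex^'d::finite"
  assumes "open V" "a \<in> V"
  shows "eventually (\<lambda>s. a + axis j s \<in> V) (nhds 0)"
proof -
  have "((\<lambda>s. a + axis j s) \<longlongrightarrow> a + axis j 0) (at (0::complex))"
  proof (intro tendsto_intros)
    show "(axis j \<longlongrightarrow> axis j 0) (at (0::complex))"
      unfolding axis_def[abs_def]
      apply (intro tendsto_vec_lambda)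
      subgoal for i by (cases "i = j") (auto intro: tendsto_ident_at)
      done
  qed
  then have "((\<lambda>s. a + axis j s) \<longlongrightarrow> a) (at (0::complex))" by simp
  from topological_tendstoD[OF this assms] have "eventually (\<lambda>s. a + axis j s \<in> V) (at 0)" .
  then show ?thesis using assms(2) by (intro eventually_nhds_from_at) auto
qed

lemma axis_sum:
  fixes a :: "complex^'d::finite"
  shows "(\<Sum>i\<in>UNIV. (a + axis j s) $ i * h i) = (\<Sum>i\<in>UNIV. a $ i * h i) + s * h j"
proof -
  have "(\<Sum>i\<in>UNIV. (a + axis j s) $ i * h i) = (\<Sum>i\<in>UNIV. a $ i * h i + (if i = j then s * h j else 0))"
    by (intro sum.cong) (auto simp: axis_def algebra_simps)
  also have "\<dots> = (\<Sum>i\<in>UNIV. a $ i * h i) + s * h j"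
    by (simp add: sum.distrib)
  finally show ?thesis .
qed

lemma prod_list_hol:
  assumes "\<forall>j. \<Phi> j holomorphic_on B"
  shows "(\<lambda>v. prod_list (map (\<lambda>j. \<Phi> j v) J)) holomorphic_on B"
  using assms by (induction J) (auto intro!: holomorphic_intros)

locale LSetting =
  fixes V :: "(complex^'d::finite) set" and B :: "complex set"
    and \<Phi> :: "'d \<Rightarrow> complex \<Rightarrow> complex" and u :: "complex^'d \<Rightarrow> complex"
  assumes V: "open V" and B: "open B" and \<Phi>h: "\<forall>j. \<Phi> j holomorphic_on B"
    and uB: "\<forall>a\<in>V. u a \<in> B"
    and eq: "\<forall>a\<in>V. u a = (\<Sum>i\<in>UNIV. a$i * \<Phi> i (u a))"
    and Qnz: "\<forall>a\<in>V. 1 - (\<Sum>i\<in>UNIV. a$i * deriv (\<Phi> i) (u a)) \<noteq> 0"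
    and ud: "\<forall>a\<in>V. \<forall>j. (\<lambda>s. u (a + axis j s)) field_differentiable (at 0)"
begin

definition Qa where "Qa a = (\<lambda>v. 1 - (\<Sum>i\<in>UNIV. a$i * deriv (\<Phi> i) v))"

lemma Qa_hol: "Qa a holomorphic_on B"
  unfolding Qa_def using \<Phi>h B by (auto intro!: holomorphic_intros)

lemma Qa_axis: "Qa (a + axis j s) = (\<lambda>v. Qa a v - s * deriv (\<Phi> j) v)"
proof (rule ext)
  fix v
  show "Qa (a + axis j s) v = Qa a v - s * deriv (\<Phi> j) v"
    using axis_sum[of a j s "\<lambda>i. deriv (\<Phi> i) v"] by (simp add: Qa_def)
qed

lemma base_deriv:
  assumes a: "a \<in> V"
  shows "((\<lambda>s. u (a + axis j s)) has_field_derivative \<Phi> j (u a) / Qa a (u a)) (at 0)"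
proof -
  define f where "f = (\<lambda>s. u (a + axis j s))"
  define v where "v = u a"
  have f0: "f 0 = v" by (simp add: f_def v_def)
  obtain D where D: "(f has_field_derivative D) (at 0)"
    using ud a unfolding f_def field_differentiable_def by blast
  have vB: "v \<in> B" using uB a by (simp add: v_def)
  have dPhi: "\<And>i. (\<Phi> i has_field_derivative deriv (\<Phi> i) v) (at v)"
    using \<Phi>h B vB by (intro hol_D) auto
  have ev: "eventually (\<lambda>s. f s = (\<Sum>i\<in>UNIV. a$i * \<Phi> i (f s)) + s * \<Phi> j (f s)) (nhds 0)"
    using ev_axis[OF V a, of j]
  proof eventually_elim
    case (elim s)
    have "u (a + axis j s) = (\<Sum>i\<in>UNIV. (a + axis j s)$i * \<Phi> i (u (a + axis j s)))"
      using eq elim by blast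
    then show ?case unfolding f_def axis_sum .
  qed
  have R: "((\<lambda>s. (\<Sum>i\<in>UNIV. a$i * \<Phi> i (f s)) + s * \<Phi> j (f s)) has_field_derivative
       (\<Sum>i\<in>UNIV. a$i * (deriv (\<Phi> i) (f 0) * D)) + (1 * \<Phi> j (f 0) + deriv (\<Phi> j) (f 0) * D * 0)) (at 0)"
    by (intro DERIV_add DERIV_sum DERIV_cmult DERIV_mult DERIV_ident DERIV_chain2[OF dPhi[folded f0] D])
  have "(f has_field_derivative (\<Sum>i\<in>UNIV. a$i * (deriv (\<Phi> i) v * D)) + \<Phi> j v) (at 0)"
    using DERIV_cong_ev[OF refl ev refl] R f0 by simp
  then have "D = (\<Sum>i\<in>UNIV. a$i * (deriv (\<Phi> i) v * D)) + \<Phi> j v"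
    using DERIV_unique[OF D] by blast
  then have "D * Qa a v = \<Phi> j v"
    unfolding Qa_def by (simp add: algebra_simps sum_distrib_left sum_distrib_right)
  then have "D = \<Phi> j v / Qa a v" using Qnz a by (simp add: Qa_def v_def field_simps)
  then show ?thesis using D by (simp add: f_def v_def)
qed

lemma main_list:
  "a \<in> V \<Longrightarrow> iter_pdiff (j#J) u a
     = (Dop (Qa a) ^^ length J) (\<lambda>v. prod_list (map (\<lambda>j. \<Phi> j v) (j#J)) / Qa a v) (u a)"
proof (induction J arbitrary: j a)
  case Nil
  then show ?case using DERIV_imp_deriv[OF base_deriv[OF Nil, of j]]
    by (simp add: pdiff_def)
next
  case (Cons j' J)
  define K where "K = (\<lambda>v. prod_list (map (\<lambda>j. \<Phi> j v) (j'#J)))"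
  have Kh: "K holomorphic_on B" unfolding K_def by (rule prod_list_hol[OF \<Phi>h])
  have ev: "eventually (\<lambda>s. iter_pdiff (j'#J) u (a + axis j s) =
     (Dop (\<lambda>v. Qa a v - s * deriv (\<Phi> j) v) ^^ length J) (\<lambda>v. K v / (Qa a v - s * deriv (\<Phi> j) v)) (u (a + axis j s))) (nhds 0)"
    using ev_axis[OF V Cons.prems, of j]
    by eventually_elim (use Cons.IH in \<open>auto simp: Qa_axis K_def\<close>)
  have S: "((\<lambda>s. (Dop (\<lambda>v. Qa a v - s * deriv (\<Phi> j) v) ^^ length J) (\<lambda>v. K v / (Qa a v - s * deriv (\<Phi> j) v)) (u (a + axis j s)))
      has_field_derivative (Dop (Qa a) ^^ Suc (length J)) (\<lambda>v. \<Phi> j v * K v / Qa a v) (u a)) (at 0)"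
    by (rule step_lemma[OF B Qa_hol \<Phi>h[rule_format] Kh])
       (use uB Qnz Cons.prems base_deriv[OF Cons.prems] in \<open>auto simp: Qa_def\<close>)
  have "iter_pdiff (j#j'#J) u a = deriv (\<lambda>s. iter_pdiff (j'#J) u (a + axis j s)) 0"
    by (simp add: pdiff_def)
  also have "\<dots> = (Dop (Qa a) ^^ Suc (length J)) (\<lambda>v. \<Phi> j v * K v / Qa a v) (u a)"
    using DERIV_imp_deriv[OF S] deriv_cong_ev[OF ev refl] by simp
  finally show ?case by (simp add: K_def)
qed

end


definition LS :: "nat \<Rightarrow> nat \<Rightarrow> nat list set" where
  "LS n l = {xs. length xs = n \<and> (\<forall>x\<in>set xs. 0 < x) \<and> sum_list xs = l}"

lemma LS_finite: "finite (LS n l)"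
proof (rule finite_subset[OF _ finite_lists_length_eq[of "{0..l}" n]])
  show "LS n l \<subseteq> {xs. set xs \<subseteq> {0..l} \<and> length xs = n}"
    by (auto simp: LS_def member_le_sum_list)
qed simp

lemma LS_Suc_sum:
  "(\<Sum>ys\<in>LS (Suc n) l. f ys) = (\<Sum>i\<in>{1..l}. \<Sum>xs\<in>LS n (l-i). f (i # xs))"
proof -
  have "(\<Sum>i\<in>{1..l}. \<Sum>xs\<in>LS n (l-i). f (i # xs)) = (\<Sum>p\<in>Sigma {1..l} (\<lambda>i. LS n (l-i)). f (fst p # snd p))"
    by (subst sum.Sigma) (auto simp: LS_finite split_def)
  also have "\<dots> = (\<Sum>ys\<in>LS (Suc n) l. f ys)"
  proof (rule sum.reindex_bij_witness[where i="\<lambda>ys. (hd ys, tl ys)" and j="\<lambda>p. fst p # snd p"])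
    fix ys assume ys: "ys \<in> LS (Suc n) l"
    then obtain y zs where yz: "ys = y # zs" by (cases ys) (auto simp: LS_def)
    show "fst (hd ys, tl ys) # snd (hd ys, tl ys) = ys" using yz by simp
    show "(hd ys, tl ys) \<in> Sigma {1..l} (\<lambda>i. LS n (l - i))"
      using ys yz by (auto simp: LS_def)
  next
    fix p assume p: "p \<in> Sigma {1..l} (\<lambda>i. LS n (l - i))"
    show "(hd (fst p # snd p), tl (fst p # snd p)) = p" by simp
    show "fst p # snd p \<in> LS (Suc n) l" using p by (auto simp: LS_def)
  qed simp
  finally show ?thesis by simp
qed

lemma fps_pow_nth_lists:
  fixes D :: "complex fps"
  assumes "D $ 0 = 0"
  shows "(D ^ n) $ l = (\<Sum>xs\<in>LS n l. prod_list (map (\<lambda>x. D $ x) xs))"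
proof (induction n arbitrary: l)
  case 0
  have "LS 0 l = (if l = 0 then {[]} else {})" by (auto simp: LS_def)
  then show ?case by simp
next
  case (Suc n)
  have "(D ^ Suc n) $ l = (\<Sum>i=0..l. D $ i * (D ^ n) $ (l - i))"
    by (simp add: fps_mult_nth)
  also have "\<dots> = (\<Sum>i\<in>{1..l}. D $ i * (D ^ n) $ (l - i))"
    using assms by (intro sum.mono_neutral_right) (auto, case_tac i, auto)
  also have "\<dots> = (\<Sum>i\<in>{1..l}. \<Sum>xs\<in>LS n (l-i). prod_list (map (\<lambda>x. D $ x) (i # xs)))"
    by (simp add: Suc.IH sum_distrib_left)
  also have "\<dots> = (\<Sum>xs\<in>LS (Suc n) l. prod_list (map (\<lambda>x. D $ x) xs))"
    by (rule LS_Suc_sum[symmetric])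
  finally show ?case .
qed

definition MS :: "nat \<Rightarrow> nat \<Rightarrow> nat multiset set" where
  "MS n l = {A. size A = n \<and> 0 \<notin># A \<and> sum_mset A = l}"

lemma MS_image: "MS n l = mset ` LS n l"
proof
  show "mset ` LS n l \<subseteq> MS n l"
    by (auto simp: LS_def MS_def sum_mset_sum_list)
  show "MS n l \<subseteq> mset ` LS n l"
  proof
    fix A assume A: "A \<in> MS n l"
    obtain xs where xs: "mset xs = A" using ex_mset by blast
    have "xs \<in> LS n l" using A xs
      by (auto simp: LS_def MS_def sum_mset_sum_list[symmetric] intro!: Nat.gr0I)
    then show "A \<in> mset ` LS n l" using xs by blast
  qed
qed

lemma MS_finite: "finite (MS n l)"
  unfolding MS_image by (intro finite_imageI LS_finite)

lemma card_perm_complex: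
  "(of_nat (card (permutations_of_multiset A)) :: complex)
     = fact (size A) / (\<Prod>x\<in>set_mset A. fact (count A x))"
proof -
  have "(of_nat (card (permutations_of_multiset A)) :: complex) * of_nat (\<Prod>x\<in>set_mset A. fact (count A x))
      = of_nat (fact (size A))"
    unfolding of_nat_mult[symmetric] card_permutations_of_multiset_aux ..
  moreover have "(of_nat (\<Prod>x\<in>set_mset A. fact (count A x)) :: complex) \<noteq> 0"
  proof -
    have "(\<Prod>x\<in>set_mset A. fact (count A x)) \<noteq> (0::nat)" by (simp add: prod_zero_iff)
    then show ?thesis by (simp only: of_nat_eq_0_iff) simp
  qed
  ultimately show ?thesis by (simp add: field_simps)
qed

lemma LS_mset: "x \<in> LS n l \<Longrightarrow> mset y = mset x \<Longrightarrow> y \<in> LS n l"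
proof -
  assume a: "x \<in> LS n l" "mset y = mset x"
  have "length y = length x" using a(2) by (rule mset_eq_length)
  moreover have "set y = set x" using a(2) by (rule mset_eq_setD)
  moreover have "sum_list y = sum_list x" using a(2) by (metis sum_mset_sum_list)
  ultimately show ?thesis using a(1) by (simp add: LS_def)
qed

lemma lists_to_ms:
  fixes d :: "nat \<Rightarrow> complex"
  shows "(\<Sum>xs\<in>LS n l. prod_list (map d xs))
     = (\<Sum>A\<in>MS n l. fact (size A) / (\<Prod>x\<in>set_mset A. fact (count A x)) * prod_mset (image_mset d A))"
proof -
  have "(\<Sum>xs\<in>LS n l. prod_list (map d xs)) = (\<Sum>A\<in>MS n l. \<Sum>xs\<in>{xs\<in>LS n l. mset xs = A}. prod_list (map d xs))"
    by (rule sum.group[symmetric]) (auto simp: LS_finite MS_finite MS_image)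
  also have "\<dots> = (\<Sum>A\<in>MS n l. of_nat (card (permutations_of_multiset A)) * prod_mset (image_mset d A))"
  proof (intro sum.cong refl)
    fix A assume A: "A \<in> MS n l"
    have e: "{xs\<in>LS n l. mset xs = A} = permutations_of_multiset A"
    proof
      show "{xs\<in>LS n l. mset xs = A} \<subseteq> permutations_of_multiset A"
        by (auto simp: permutations_of_multiset_def)
      show "permutations_of_multiset A \<subseteq> {xs\<in>LS n l. mset xs = A}"
      proof
        fix y assume y: "y \<in> permutations_of_multiset A"
        obtain x where x: "x \<in> LS n l" "A = mset x" using A by (auto simp: MS_image)
        show "y \<in> {xs\<in>LS n l. mset xs = A}"
          using y x LS_mset[OF x(1), of y] by (auto simp: permutations_of_multiset_def)
      qed
    qed
    have "(\<Sum>xs\<in>{xs\<in>LS n l. mset xs = A}. prod_list (map d xs))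
        = (\<Sum>xs\<in>permutations_of_multiset A. prod_mset (image_mset d A))"
      unfolding e by (intro sum.cong refl) (auto simp: permutations_of_multiset_def prod_mset_prod_list[symmetric])
    also have "\<dots> = of_nat (card (permutations_of_multiset A)) * prod_mset (image_mset d A)" by simp
    finally show "(\<Sum>xs\<in>{xs\<in>LS n l. mset xs = A}. prod_list (map d xs))
        = of_nat (card (permutations_of_multiset A)) * prod_mset (image_mset d A)" .
  qed
  finally show ?thesis by (simp add: card_perm_complex)
qed

lemma inv_pow_nth:
  fixes c :: "nat \<Rightarrow> complex"
  assumes c1: "c 1 \<noteq> 0"
  defines "D \<equiv> Abs_fps (\<lambda>j. if j = 0 then 0 else c (Suc j) / c 1)"
  shows "(inverse (fps_shift 1 (Abs_fps c)) ^ N) $ l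
     = inverse (c 1) ^ N * (\<Sum>n=0..l. (- of_nat N gchoose n) * (D ^ n $ l))"
proof -
  have D0: "D $ 0 = 0" by (simp add: D_def)
  have sh: "fps_shift 1 (Abs_fps c) = fps_const (c 1) * (1 + D)"
    using c1 by (auto simp: fps_eq_iff D_def)
  have cmp: "(1 + fps_X) oo D = 1 + D"
    using D0 by (simp add: fps_compose_add_distrib)
  have "inverse (fps_shift 1 (Abs_fps c)) ^ N = fps_const (inverse (c 1) ^ N) * inverse (1 + D) ^ N"
    unfolding sh fps_inverse_mult by (simp add: power_mult_distrib fps_const_inverse)
  also have "inverse (1 + D) ^ N = inverse ((1 + D) ^ N)" by (simp add: fps_inverse_power)
  also have "(1 + D) ^ N = (1 + fps_X) ^ N oo D"
    unfolding cmp[symmetric] by (rule fps_compose_power[OF D0])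
  also have "inverse ((1 + fps_X) ^ N oo D) = inverse ((1 + fps_X :: complex fps) ^ N) oo D"
    by (rule fps_inverse_compose[OF D0, symmetric]) simp
  also have "inverse ((1 + fps_X :: complex fps) ^ N) = fps_binomial (- of_nat N)"
    by (rule fps_binomial_minus_of_nat[symmetric])
  finally show ?thesis by (simp add: fps_compose_nth)
qed

lemma prod_mset_div:
  fixes f g :: "nat \<Rightarrow> complex"
  assumes "\<forall>x\<in>#A. g x = f x / k"
  shows "prod_mset (image_mset g A) = prod_mset (image_mset f A) / k ^ size A"
  using assms by (induction A) (auto simp: field_simps)

lemma size_le_sum_mset: "0 \<notin># A \<Longrightarrow> size A \<le> sum_mset (A :: nat multiset)"
  by (induction A) auto

definition MSall :: "nat \<Rightarrow> nat multiset set" where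
  "MSall r = {A. 0 \<notin># A \<and> sum_mset A \<le> r}"

lemma flatten_sum:
  fixes F :: "nat \<Rightarrow> nat \<Rightarrow> nat multiset \<Rightarrow> complex"
  shows "(\<Sum>i\<le>r. \<Sum>n=0..r-i. \<Sum>A\<in>MS n (r-i). F i n A)
       = (\<Sum>A\<in>MSall r. F (r - sum_mset A) (size A) A)"
proof -
  have "(\<Sum>i\<le>r. \<Sum>n=0..r-i. \<Sum>A\<in>MS n (r-i). F i n A)
      = (\<Sum>p\<in>Sigma {..r} (\<lambda>i. Sigma {0..r-i} (\<lambda>n. MS n (r-i))). F (fst p) (fst (snd p)) (snd (snd p)))"
    by (subst sum.Sigma, simp, simp add: MS_finite finite_SigmaI, subst sum.Sigma)
       (auto simp: MS_finite split_def)
  also have "\<dots> = (\<Sum>A\<in>MSall r. F (r - sum_mset A) (size A) A)"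
  proof (rule sum.reindex_bij_witness[where i="\<lambda>A. (r - sum_mset A, size A, A)" and j="\<lambda>p. snd (snd p)"])
    fix A assume A: "A \<in> MSall r"
    have "size A \<le> sum_mset A" using A by (intro size_le_sum_mset) (auto simp: MSall_def)
    then show "(r - sum_mset A, size A, A) \<in> Sigma {..r} (\<lambda>i. Sigma {0..r-i} (\<lambda>n. MS n (r-i)))"
      using A by (auto simp: MSall_def MS_def)
  next
    fix p assume p: "p \<in> Sigma {..r} (\<lambda>i. Sigma {0..r-i} (\<lambda>n. MS n (r-i)))"
    then show "(r - sum_mset (snd (snd p)), size (snd (snd p)), snd (snd p)) = p"
      by (auto simp: MS_def)
    show "snd (snd p) \<in> MSall r" using p by (auto simp: MS_def MSall_def)
    show "F (r - sum_mset (snd (snd p))) (size (snd (snd p))) (snd (snd p)) = F (fst p) (fst (snd p)) (snd (snd p))"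
      using p by (auto simp: MS_def)
  qed auto
  finally show ?thesis .
qed

lemma MSall_finite: "finite (MSall r)"
proof -
  have "MSall r \<subseteq> (\<Union>n\<le>r. \<Union>l\<le>r. MS n l)"
  proof
    fix A assume A: "A \<in> MSall r"
    have "size A \<le> sum_mset A" using A by (intro size_le_sum_mset) (auto simp: MSall_def)
    then show "A \<in> (\<Union>n\<le>r. \<Union>l\<le>r. MS n l)" using A by (auto simp: MSall_def MS_def)
  qed
  then show ?thesis by (rule finite_subset) (auto simp: MS_finite)
qed

lemma core_rhs:
  fixes c :: "nat \<Rightarrow> complex" and x b :: complex
  assumes c1: "c 1 \<noteq> 0"
  shows "(\<Sum>i\<le>r. (x gchoose i) * b^i * (inverse (fps_shift 1 (Abs_fps c)) ^ Suc r) $ (r - i))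
   = (\<Sum>A\<in>MSall r. (-1)^size A * (x gchoose (r - sum_mset A)) * b^(r - sum_mset A)
        * fact (r + size A) / (fact r * c 1 ^ (r + 1 + size A))
        * prod_mset (image_mset (\<lambda>x. c (Suc x)) A) / (\<Prod>x\<in>set_mset A. fact (count A x)))"
proof -
  define D where "D = Abs_fps (\<lambda>j. if j = 0 then 0 else c (Suc j) / c 1)"
  have D0: "D $ 0 = 0" by (simp add: D_def)
  have H: "(inverse (fps_shift 1 (Abs_fps c)) ^ Suc r) $ l
     = (\<Sum>n=0..l. \<Sum>A\<in>MS n l. inverse (c 1) ^ Suc r * (- of_nat (Suc r) gchoose n) *
           (fact (size A) / (\<Prod>x\<in>set_mset A. fact (count A x)) * prod_mset (image_mset (\<lambda>x. D $ x) A)))" for l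
    unfolding inv_pow_nth[of c "Suc r" l, OF c1, folded D_def] fps_pow_nth_lists[OF D0] lists_to_ms
    by (simp add: sum_distrib_left mult_ac)
  have "(\<Sum>i\<le>r. (x gchoose i) * b^i * (inverse (fps_shift 1 (Abs_fps c)) ^ Suc r) $ (r - i))
      = (\<Sum>i\<le>r. \<Sum>n=0..r-i. \<Sum>A\<in>MS n (r-i). (x gchoose i) * b^i * (inverse (c 1) ^ Suc r * (- of_nat (Suc r) gchoose n) *
           (fact (size A) / (\<Prod>x\<in>set_mset A. fact (count A x)) * prod_mset (image_mset (\<lambda>x. D $ x) A))))"
    unfolding H by (simp add: sum_distrib_left)
  also have "\<dots> = (\<Sum>A\<in>MSall r. (x gchoose (r - sum_mset A)) * b^(r - sum_mset A) * (inverse (c 1) ^ Suc r * (- of_nat (Suc r) gchoose size A) *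
           (fact (size A) / (\<Prod>x\<in>set_mset A. fact (count A x)) * prod_mset (image_mset (\<lambda>x. D $ x) A))))"
    by (rule flatten_sum)
  also have "\<dots> = (\<Sum>A\<in>MSall r. (-1)^size A * (x gchoose (r - sum_mset A)) * b^(r - sum_mset A)
        * fact (r + size A) / (fact r * c 1 ^ (r + 1 + size A))
        * prod_mset (image_mset (\<lambda>x. c (Suc x)) A) / (\<Prod>x\<in>set_mset A. fact (count A x)))"
  proof (intro sum.cong refl)
    fix A assume A: "A \<in> MSall r"
    have pm: "prod_mset (image_mset (\<lambda>x. D $ x) A) = prod_mset (image_mset (\<lambda>x. c (Suc x)) A) / c 1 ^ size A"
      using A by (intro prod_mset_div) (auto simp: D_def MSall_def)
    have gb: "(- of_nat (Suc r) gchoose size A) = (-1) ^ size A * of_nat ((r + size A) choose size A)"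
      by (subst gbinomial_negated_upper) (simp add: binomial_gbinomial add_ac)
    have fc: "of_nat ((r + size A) choose size A) * (fact (size A) :: complex) = fact (r + size A) / fact r"
      by (simp add: binomial_fact field_simps)
    show "(x gchoose (r - sum_mset A)) * b^(r - sum_mset A) * (inverse (c 1) ^ Suc r * (- of_nat (Suc r) gchoose size A) *
           (fact (size A) / (\<Prod>x\<in>set_mset A. fact (count A x)) * prod_mset (image_mset (\<lambda>x. D $ x) A)))
        = (-1)^size A * (x gchoose (r - sum_mset A)) * b^(r - sum_mset A)
        * fact (r + size A) / (fact r * c 1 ^ (r + 1 + size A))
        * prod_mset (image_mset (\<lambda>x. c (Suc x)) A) / (\<Prod>x\<in>set_mset A. fact (count A x))"
      unfolding pm gb using c1 fc
      by (simp add: field_simps power_add)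
  qed
  finally show ?thesis .
qed


definition s1f :: "(nat \<Rightarrow> nat) \<Rightarrow> nat" where "s1f \<mu> = (\<Sum>i\<in>supp2 \<mu>. (i - 1) * \<mu> i)"
definition s2f :: "(nat \<Rightarrow> nat) \<Rightarrow> nat" where "s2f \<mu> = (\<Sum>i\<in>supp2 \<mu>. \<mu> i)"
definition Cfin :: "nat \<Rightarrow> (nat \<Rightarrow> nat) set" where "Cfin r = {\<mu>\<in>Cseq r. s1f \<mu> \<le> r}"
definition msetOf :: "(nat \<Rightarrow> nat) \<Rightarrow> nat multiset" where
  "msetOf \<mu> = Abs_multiset (\<lambda>j. if j = 0 then 0 else \<mu> (Suc j))"
definition muOf :: "nat \<Rightarrow> nat multiset \<Rightarrow> nat \<Rightarrow> nat" where
  "muOf r A = (\<lambda>i. if i = 0 then 0 else if i = 1 then r - size A else count A (i - 1))"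

lemma Cseq_fin: "\<mu> \<in> Cseq r \<Longrightarrow> finite {i. \<mu> i \<noteq> 0}"
  by (simp add: Cseq_def)

lemma supp2_fin: "\<mu> \<in> Cseq r \<Longrightarrow> finite (supp2 \<mu>)"
  by (rule finite_subset[OF _ Cseq_fin]) (auto simp: supp2_def)

lemma Cseq_split: "\<mu> \<in> Cseq r \<Longrightarrow> \<mu> 1 + s2f \<mu> = r"
proof -
  assume m: "\<mu> \<in> Cseq r"
  define S where "S = {i. \<mu> i \<noteq> 0}"
  have S: "finite S" using Cseq_fin[OF m] by (simp add: S_def)
  have sub: "S \<subseteq> insert 1 (supp2 \<mu>)"
  proof
    fix i assume i: "i \<in> S"
    then have nz: "\<mu> i \<noteq> 0" by (simp add: S_def)
    have "i \<noteq> 0"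
    proof
      assume "i = 0" with nz m show False by (simp add: Cseq_def)
    qed
    then show "i \<in> insert 1 (supp2 \<mu>)" using nz by (cases "i = 1") (auto simp: supp2_def)
  qed
  have "(\<Sum>i\<in>insert 1 (supp2 \<mu>). \<mu> i) = (\<Sum>i\<in>S. \<mu> i)"
    using sub supp2_fin[OF m] by (intro sum.mono_neutral_right) (auto simp: S_def)
  also have "\<dots> = r" using m by (simp add: S_def Cseq_def)
  finally have "(\<Sum>i\<in>insert 1 (supp2 \<mu>). \<mu> i) = r" .
  moreover have "(\<Sum>i\<in>insert 1 (supp2 \<mu>). \<mu> i) = \<mu> 1 + (\<Sum>i\<in>supp2 \<mu>. \<mu> i)"
    by (rule sum.insert[OF supp2_fin[OF m]]) (simp add: supp2_def)
  ultimately show ?thesis by (simp add: s2f_def)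
qed

lemma Cfin_finite: "finite (Cfin r)"
proof -
  have "Cfin r \<subseteq> {\<mu>. \<forall>i. (i \<in> {1..r+1} \<longrightarrow> \<mu> i \<in> {0..r}) \<and> (i \<notin> {1..r+1} \<longrightarrow> \<mu> i = 0)}"
  proof (clarify)
    fix \<mu> i assume m: "\<mu> \<in> Cfin r"
    have mC: "\<mu> \<in> Cseq r" using m by (simp add: Cfin_def)
    have le: "\<mu> j \<le> r" for j
    proof (cases "\<mu> j = 0")
      case False
      have "\<mu> j \<le> (\<Sum>i\<in>{i. \<mu> i \<noteq> 0}. \<mu> i)"
        using False Cseq_fin[OF mC] by (intro member_le_sum) auto
      then show ?thesis using mC by (simp add: Cseq_def)
    qed simp
    have big: "\<mu> j = 0" if "j \<notin> {1..r+1}" for j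
    proof (rule ccontr)
      assume nz: "\<mu> j \<noteq> 0"
      have "j \<noteq> 0"
      proof
        assume "j = 0" with nz mC show False by (simp add: Cseq_def)
      qed
      then have j2: "r + 2 \<le> j" using that by auto
      then have js: "j \<in> supp2 \<mu>" using nz by (simp add: supp2_def)
      have "(j - 1) * \<mu> j \<le> s1f \<mu>"
        unfolding s1f_def using js supp2_fin[OF mC] by (intro member_le_sum) auto
      moreover have "r + 1 \<le> (j - 1) * \<mu> j"
      proof -
        have "j - 1 \<le> (j - 1) * \<mu> j" using nz by simp
        moreover have "r + 1 \<le> j - 1" using j2 by arith
        ultimately show ?thesis by linarith
      qed
      ultimately show False using m by (simp add: Cfin_def)
    qed
    show "(i \<in> {1..r+1} \<longrightarrow> \<mu> i \<in> {0..r}) \<and> (i \<notin> {1..r+1} \<longrightarrow> \<mu> i = 0)"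
      using le big by auto
  qed
  moreover have "finite {\<mu>. \<forall>i. (i \<in> {1..r+1} \<longrightarrow> \<mu> i \<in> {0..r}) \<and> (i \<notin> {1..r+1} \<longrightarrow> \<mu> i = (0::nat))}"
    by (rule finite_set_of_finite_funs) auto
  ultimately show ?thesis by (rule finite_subset)
qed

lemma count_msetOf: "\<mu> \<in> Cseq r \<Longrightarrow> count (msetOf \<mu>) = (\<lambda>j. if j = 0 then 0 else \<mu> (Suc j))"
  unfolding msetOf_def
proof (rule count_Abs_multiset)
  assume m: "\<mu> \<in> Cseq r"
  have "{x. 0 < (if x = 0 then 0 else \<mu> (Suc x))} \<subseteq> (\<lambda>i. i - 1) ` {i. \<mu> i \<noteq> 0}"
    by (auto intro!: image_eqI[where x="Suc _"] split: if_splits)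
  then show "finite {x. 0 < (if x = 0 then 0 else \<mu> (Suc x))}"
    by (rule finite_subset) (use Cseq_fin[OF m] in auto)
qed

lemma set_msetOf: "\<mu> \<in> Cseq r \<Longrightarrow> set_mset (msetOf \<mu>) = (\<lambda>i. i - 1) ` supp2 \<mu>"
proof -
  assume m: "\<mu> \<in> Cseq r"
  show ?thesis
  proof (rule set_eqI)
    fix j
    show "j \<in># msetOf \<mu> \<longleftrightarrow> j \<in> (\<lambda>i. i - 1) ` supp2 \<mu>"
    proof
      assume "j \<in># msetOf \<mu>"
      then have "count (msetOf \<mu>) j \<noteq> 0" by simp
      then have "j \<noteq> 0" "\<mu> (Suc j) \<noteq> 0" using count_msetOf[OF m] by (auto split: if_splits)
      then show "j \<in> (\<lambda>i. i - 1) ` supp2 \<mu>" by (intro image_eqI[where x="Suc j"]) (auto simp: supp2_def)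
    next
      assume "j \<in> (\<lambda>i. i - 1) ` supp2 \<mu>"
      then obtain i where i: "i \<in> supp2 \<mu>" "j = i - 1" by auto
      then have "j \<noteq> 0" "Suc j = i" by (auto simp: supp2_def)
      then have "count (msetOf \<mu>) j = \<mu> i" using count_msetOf[OF m] by simp
      moreover have "\<mu> i \<noteq> 0" using i by (simp add: supp2_def)
      ultimately show "j \<in># msetOf \<mu>" by (metis count_eq_zero_iff)
    qed
  qed
qed

lemma inj_pred_supp2: "inj_on (\<lambda>i. i - 1) (supp2 \<mu>)"
  by (auto simp: inj_on_def supp2_def)

lemma sum_msetOf:
  fixes h :: "nat \<Rightarrow> nat \<Rightarrow> 'a::comm_monoid_add"
  assumes m: "\<mu> \<in> Cseq r"
  shows "(\<Sum>j\<in>set_mset (msetOf \<mu>). h j (count (msetOf \<mu>) j)) = (\<Sum>i\<in>supp2 \<mu>. h (i - 1) (\<mu> i))"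
proof -
  have "(\<Sum>j\<in>set_mset (msetOf \<mu>). h j (count (msetOf \<mu>) j)) = (\<Sum>j\<in>(\<lambda>i. i - 1) ` supp2 \<mu>. h j (count (msetOf \<mu>) j))"
    by (simp only: set_msetOf[OF m])
  also have "\<dots> = (\<Sum>i\<in>supp2 \<mu>. h (i - 1) (count (msetOf \<mu>) (i - 1)))"
    by (rule sum.reindex[OF inj_pred_supp2, unfolded comp_def])
  also have "\<dots> = (\<Sum>i\<in>supp2 \<mu>. h (i - 1) (\<mu> i))"
  proof (rule sum.cong[OF refl])
    fix i assume "i \<in> supp2 \<mu>"
    then have "i - 1 \<noteq> 0" "Suc (i - 1) = i" by (auto simp: supp2_def)
    then show "h (i - 1) (count (msetOf \<mu>) (i - 1)) = h (i - 1) (\<mu> i)" by (simp add: count_msetOf[OF m])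
  qed
  finally show ?thesis .
qed

lemma prod_msetOf:
  fixes h :: "nat \<Rightarrow> nat \<Rightarrow> 'a::comm_monoid_mult"
  assumes m: "\<mu> \<in> Cseq r"
  shows "(\<Prod>j\<in>set_mset (msetOf \<mu>). h j (count (msetOf \<mu>) j)) = (\<Prod>i\<in>supp2 \<mu>. h (i - 1) (\<mu> i))"
proof -
  have "(\<Prod>j\<in>set_mset (msetOf \<mu>). h j (count (msetOf \<mu>) j)) = (\<Prod>j\<in>(\<lambda>i. i - 1) ` supp2 \<mu>. h j (count (msetOf \<mu>) j))"
    by (simp only: set_msetOf[OF m])
  also have "\<dots> = (\<Prod>i\<in>supp2 \<mu>. h (i - 1) (count (msetOf \<mu>) (i - 1)))"
    by (rule prod.reindex[OF inj_pred_supp2, unfolded comp_def])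
  also have "\<dots> = (\<Prod>i\<in>supp2 \<mu>. h (i - 1) (\<mu> i))"
  proof (rule prod.cong[OF refl])
    fix i assume "i \<in> supp2 \<mu>"
    then have "i - 1 \<noteq> 0" "Suc (i - 1) = i" by (auto simp: supp2_def)
    then show "h (i - 1) (count (msetOf \<mu>) (i - 1)) = h (i - 1) (\<mu> i)" by (simp add: count_msetOf[OF m])
  qed
  finally show ?thesis .
qed

lemma sum_mset_count: "sum_mset (A :: nat multiset) = (\<Sum>j\<in>set_mset A. j * count A j)"
proof (induction A)
  case empty then show ?case by simp
next
  case (add x A)
  show ?case
  proof (cases "x \<in># A")
    case True
    have "(\<Sum>j\<in>set_mset (add_mset x A). j * count (add_mset x A) j)
        = (\<Sum>j\<in>set_mset A. j * count A j + (if j = x then x else 0))"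
      using True by (intro sum.cong) (auto simp: algebra_simps insert_absorb)
    also have "\<dots> = (\<Sum>j\<in>set_mset A. j * count A j) + x"
      using True by (simp add: sum.distrib)
    finally show ?thesis using add by simp
  next
    case False
    have "(\<Sum>j\<in>set_mset (add_mset x A). j * count (add_mset x A) j)
        = x + (\<Sum>j\<in>set_mset A. j * count (add_mset x A) j)"
      using False by (simp add: not_in_iff)
    also have "(\<Sum>j\<in>set_mset A. j * count (add_mset x A) j) = (\<Sum>j\<in>set_mset A. j * count A j)"
      using False by (intro sum.cong) auto
    finally show ?thesis using add by simp
  qed
qed

lemma size_count: "size (A :: 'a multiset) = (\<Sum>j\<in>set_mset A. count A j)"
  by (simp add: size_multiset_overloaded_eq)

lemma size_msetOf: "\<mu> \<in> Cseq r \<Longrightarrow> size (msetOf \<mu>) = s2f \<mu>"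
  using sum_msetOf[of \<mu> r "\<lambda>j k. k"] by (simp add: size_count s2f_def)

lemma sum_mset_msetOf: "\<mu> \<in> Cseq r \<Longrightarrow> sum_mset (msetOf \<mu>) = s1f \<mu>"
  using sum_msetOf[of \<mu> r "\<lambda>j k. j * k"] by (simp add: sum_mset_count s1f_def)

lemma nz_mem: assumes "j \<in># A" "0 \<notin># A" shows "j \<noteq> (0::nat)"
proof
  assume "j = 0" with assms show False by simp
qed

lemma MSall_props:
  assumes A: "A \<in> MSall r"
  shows "0 \<notin># A" "sum_mset A \<le> r" "size A \<le> r"
  using A size_le_sum_mset[of A] by (auto simp: MSall_def)

lemma supp2_muOf: "A \<in> MSall r \<Longrightarrow> supp2 (muOf r A) = Suc ` set_mset A"
proof -
  assume A: "A \<in> MSall r"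
  have A0: "0 \<notin># A" using MSall_props[OF A] by simp
  show ?thesis
  proof (rule set_eqI)
    fix i
    show "i \<in> supp2 (muOf r A) \<longleftrightarrow> i \<in> Suc ` set_mset A"
    proof
      assume i: "i \<in> supp2 (muOf r A)"
      then have "2 \<le> i" "count A (i - 1) \<noteq> 0" by (auto simp: supp2_def muOf_def)
      then show "i \<in> Suc ` set_mset A" by (intro image_eqI[where x="i - 1"]) (auto simp: count_eq_zero_iff)
    next
      assume "i \<in> Suc ` set_mset A"
      then obtain j where j: "j \<in># A" "i = Suc j" by auto
      have "j \<noteq> 0" using j(1) A0 by (rule nz_mem)
      then show "i \<in> supp2 (muOf r A)" using j by (auto simp: supp2_def muOf_def count_eq_zero_iff)
    qed
  qed
qed

lemma sum_muOf:
  fixes h :: "nat \<Rightarrow> nat \<Rightarrow> 'a::comm_monoid_add"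
  assumes A: "A \<in> MSall r"
  shows "(\<Sum>i\<in>supp2 (muOf r A). h i (muOf r A i)) = (\<Sum>j\<in>set_mset A. h (Suc j) (count A j))"
proof -
  have A0: "0 \<notin># A" using MSall_props[OF A] by simp
  have "(\<Sum>i\<in>supp2 (muOf r A). h i (muOf r A i)) = (\<Sum>i\<in>Suc ` set_mset A. h i (muOf r A i))"
    by (simp only: supp2_muOf[OF A])
  also have "\<dots> = (\<Sum>j\<in>set_mset A. h (Suc j) (muOf r A (Suc j)))"
    by (simp add: sum.reindex)
  also have "\<dots> = (\<Sum>j\<in>set_mset A. h (Suc j) (count A j))"
  proof (rule sum.cong[OF refl])
    fix j assume "j \<in># A" then have "j \<noteq> 0" using A0 by (rule nz_mem)
    then show "h (Suc j) (muOf r A (Suc j)) = h (Suc j) (count A j)" by (simp add: muOf_def)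
  qed
  finally show ?thesis .
qed

lemma prod_muOf:
  fixes h :: "nat \<Rightarrow> nat \<Rightarrow> 'a::comm_monoid_mult"
  assumes A: "A \<in> MSall r"
  shows "(\<Prod>i\<in>supp2 (muOf r A). h i (muOf r A i)) = (\<Prod>j\<in>set_mset A. h (Suc j) (count A j))"
proof -
  have A0: "0 \<notin># A" using MSall_props[OF A] by simp
  have "(\<Prod>i\<in>supp2 (muOf r A). h i (muOf r A i)) = (\<Prod>i\<in>Suc ` set_mset A. h i (muOf r A i))"
    by (simp only: supp2_muOf[OF A])
  also have "\<dots> = (\<Prod>j\<in>set_mset A. h (Suc j) (muOf r A (Suc j)))"
    by (simp add: prod.reindex)
  also have "\<dots> = (\<Prod>j\<in>set_mset A. h (Suc j) (count A j))"
  proof (rule prod.cong[OF refl])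
    fix j assume "j \<in># A" then have "j \<noteq> 0" using A0 by (rule nz_mem)
    then show "h (Suc j) (muOf r A (Suc j)) = h (Suc j) (count A j)" by (simp add: muOf_def)
  qed
  finally show ?thesis .
qed

lemma s1f_muOf: "A \<in> MSall r \<Longrightarrow> s1f (muOf r A) = sum_mset A"
  using sum_muOf[of A r "\<lambda>i k. (i - 1) * k"] by (simp add: s1f_def sum_mset_count)

lemma s2f_muOf: "A \<in> MSall r \<Longrightarrow> s2f (muOf r A) = size A"
  using sum_muOf[of A r "\<lambda>i k. k"] by (simp add: s2f_def size_count)

lemma muOf_Cseq: "A \<in> MSall r \<Longrightarrow> muOf r A \<in> Cseq r"
proof -
  assume A: "A \<in> MSall r"
  note P = MSall_props[OF A]
  define \<mu> where "\<mu> = muOf r A"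
  have sub: "{i. \<mu> i \<noteq> 0} \<subseteq> insert 1 (supp2 \<mu>)"
    by (auto simp: \<mu>_def muOf_def supp2_def split: if_splits)
  have fin: "finite (insert 1 (supp2 \<mu>))" unfolding \<mu>_def supp2_muOf[OF A] by simp
  have "(\<Sum>i\<in>{i. \<mu> i \<noteq> 0}. \<mu> i) = (\<Sum>i\<in>insert 1 (supp2 \<mu>). \<mu> i)"
    using sub fin by (intro sum.mono_neutral_left) auto
  also have "\<dots> = \<mu> 1 + s2f \<mu>" unfolding s2f_def
    by (rule sum.insert) (use fin in \<open>auto simp: supp2_def\<close>)
  also have "\<dots> = r" using P s2f_muOf[OF A] by (simp add: \<mu>_def muOf_def)
  finally have "(\<Sum>i\<in>{i. \<mu> i \<noteq> 0}. \<mu> i) = r" .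
  moreover have "finite {i. \<mu> i \<noteq> 0}" using sub fin by (rule finite_subset)
  moreover have "\<mu> 0 = 0" by (simp add: \<mu>_def muOf_def)
  ultimately show ?thesis by (simp add: Cseq_def \<mu>_def)
qed

lemma msetOf_muOf: "A \<in> MSall r \<Longrightarrow> msetOf (muOf r A) = A"
proof -
  assume A: "A \<in> MSall r"
  have A0: "count A 0 = 0" using MSall_props[OF A] by (simp add: count_eq_zero_iff)
  show ?thesis unfolding multiset_eq_iff
    using count_msetOf[OF muOf_Cseq[OF A]] A0 by (auto simp: muOf_def)
qed

lemma muOf_msetOf: "\<mu> \<in> Cseq r \<Longrightarrow> muOf r (msetOf \<mu>) = \<mu>"
proof (rule ext)
  fix i assume m: "\<mu> \<in> Cseq r"
  have m0: "\<mu> 0 = 0" using m by (simp add: Cseq_def)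
  show "muOf r (msetOf \<mu>) i = \<mu> i"
  proof (cases "i = 0")
    case True then show ?thesis using m0 by (simp add: muOf_def)
  next
    case False
    show ?thesis
    proof (cases "i = 1")
      case True then show ?thesis using Cseq_split[OF m] size_msetOf[OF m] by (simp add: muOf_def)
    next
      case False
      then show ?thesis using \<open>i \<noteq> 0\<close> count_msetOf[OF m] by (simp add: muOf_def)
    qed
  qed
qed

lemma msetOf_MSall: "\<mu> \<in> Cfin r \<Longrightarrow> msetOf \<mu> \<in> MSall r"
proof -
  assume m: "\<mu> \<in> Cfin r"
  then have mC: "\<mu> \<in> Cseq r" by (simp add: Cfin_def)
  have "count (msetOf \<mu>) 0 = 0" using count_msetOf[OF mC] by simp
  then show ?thesis using m sum_mset_msetOf[OF mC] by (simp add: MSall_def Cfin_def count_eq_zero_iff)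
qed

lemma Ffun_eq:
  fixes c :: "nat \<Rightarrow> complex"
  assumes Lp: "\<forall>n::nat. Lpow \<alpha>L (- of_nat n) = b ^ n"
  shows "Ffun \<alpha>L c x r 1 = - Lpow \<alpha>L x * (\<Sum>A\<in>MSall r. (-1)^(r - size A) * (x gchoose (r - sum_mset A))
     * fact (r + size A) * b^(r - sum_mset A) / c 1 ^ (r + 1 + size A)
     * (\<Prod>j\<in>set_mset A. c (Suc j) ^ count A j / fact (count A j)))"
proof -
  define T where "T \<mu> = (-1) ^ (\<mu> 1) * gbinom x (int r - int (s1f \<mu>)) * of_nat (fact (r + s2f \<mu>)) *
      Lpow \<alpha>L (- of_int (int r - int (s1f \<mu>))) / c 1 ^ (r + 1 + s2f \<mu>) *
      (\<Prod>i\<in>supp2 \<mu>. c i ^ \<mu> i / of_nat (fact (\<mu> i)))" for \<mu>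
  have e: "\<And>\<mu>. (let s1 = (\<Sum>i\<in>supp2 \<mu>. (i - 1) * \<mu> i);
             s2 = (\<Sum>i\<in>supp2 \<mu>. \<mu> i);
             k = int r - int s1 - (int 1 - 1)
         in (-1) ^ (\<mu> 1) * gbinom x k * of_nat (fact (r + s2)) *
            Lpow \<alpha>L (- of_int k) / c 1 ^ (r + 1 + s2) *
            (\<Prod>i\<in>supp2 \<mu>. c i ^ \<mu> i / of_nat (fact (\<mu> i)))) = T \<mu>"
    by (simp only: Let_def T_def s1f_def s2f_def) simp
  have F: "Ffun \<alpha>L c x r 1 = - Lpow \<alpha>L x * infsum T (Cseq r)"
    by (simp only: Ffun_def e) simp
  have "infsum T (Cseq r) = infsum T (Cfin r)"
  proof (rule infsum_cong_neutral)
    fix \<mu> assume "\<mu> \<in> Cseq r - Cfin r"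
    then have "r < s1f \<mu>" by (auto simp: Cfin_def)
    then show "T \<mu> = 0" by (simp add: T_def gbinom_def)
  qed (auto simp: Cfin_def)
  also have "\<dots> = sum T (Cfin r)" by (rule infsum_finite[OF Cfin_finite])
  also have "\<dots> = (\<Sum>A\<in>MSall r. T (muOf r A))"
  proof (rule sum.reindex_bij_witness[where j=msetOf and i="muOf r"])
    fix A assume A: "A \<in> MSall r"
    show "msetOf (muOf r A) = A" by (rule msetOf_muOf[OF A])
    show "muOf r A \<in> Cfin r" using muOf_Cseq[OF A] s1f_muOf[OF A] MSall_props[OF A] by (simp add: Cfin_def)
  next
    fix \<mu> assume m: "\<mu> \<in> Cfin r"
    have e: "muOf r (msetOf \<mu>) = \<mu>" using m by (intro muOf_msetOf) (simp add: Cfin_def)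
    show "muOf r (msetOf \<mu>) = \<mu>" by (rule e)
    show "msetOf \<mu> \<in> MSall r" by (rule msetOf_MSall[OF m])
    show "T (muOf r (msetOf \<mu>)) = T \<mu>" by (simp add: e)
  qed
  also have "\<dots> = (\<Sum>A\<in>MSall r. (-1)^(r - size A) * (x gchoose (r - sum_mset A))
     * fact (r + size A) * b^(r - sum_mset A) / c 1 ^ (r + 1 + size A)
     * (\<Prod>j\<in>set_mset A. c (Suc j) ^ count A j / fact (count A j)))"
  proof (rule sum.cong[OF refl])
    fix A assume A: "A \<in> MSall r"
    note P = MSall_props[OF A]
    have m1: "muOf r A 1 = r - size A" by (simp add: muOf_def)
    have k: "int r - int (sum_mset A) = int (r - sum_mset A)" using P by simp
    have gb: "gbinom x (int r - int (sum_mset A)) = x gchoose (r - sum_mset A)"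
      unfolding k gbinom_def by simp
    have lp: "Lpow \<alpha>L (- of_int (int r - int (sum_mset A))) = b ^ (r - sum_mset A)"
      unfolding k using Lp by simp
    have pr: "(\<Prod>i\<in>supp2 (muOf r A). c i ^ muOf r A i / of_nat (fact (muOf r A i)))
        = (\<Prod>j\<in>set_mset A. c (Suc j) ^ count A j / fact (count A j))"
      using prod_muOf[OF A, of "\<lambda>i k. c i ^ k / of_nat (fact k)"] by simp
    show "T (muOf r A) = (-1)^(r - size A) * (x gchoose (r - sum_mset A))
     * fact (r + size A) * b^(r - sum_mset A) / c 1 ^ (r + 1 + size A)
     * (\<Prod>j\<in>set_mset A. c (Suc j) ^ count A j / fact (count A j))"
      unfolding T_def s1f_muOf[OF A] s2f_muOf[OF A] m1 gb lp pr by simp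
  qed
  finally show ?thesis using F by simp
qed


lemma Lpow_exp: "Lpow z \<gamma> = exp (\<gamma> * Llog z)"
  by (cases z) (simp add: Lpow_def Llog_def algebra_simps)

lemma deriv_add_const: "deriv (\<lambda>x. f x + c) x = deriv f x"
proof -
  have "(\<lambda>D. ((\<lambda>x. f x + c) has_field_derivative D) (at x)) = (\<lambda>D. (f has_field_derivative D) (at x))"
  proof (rule ext, rule iffI)
    fix D assume "((\<lambda>x. f x + c) has_field_derivative D) (at x)"
    from DERIV_add[OF this DERIV_const[of "-c"]] show "(f has_field_derivative D) (at x)" by simp
  next
    fix D assume "(f has_field_derivative D) (at x)"
    from DERIV_add[OF this DERIV_const[of c]] show "((\<lambda>x. f x + c) has_field_derivative D) (at x)" by simp
  qed
  then show ?thesis by (simp add: deriv_def)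
qed

lemma iter_pdiff_add_const_gen:
  "iter_pdiff J (\<lambda>a. h a + c) = (\<lambda>a. iter_pdiff J h a + (if J = [] then c else 0))"
proof (induction J)
  case Nil then show ?case by simp
next
  case (Cons i J)
  show ?case
    by (simp add: Cons pdiff_def deriv_add_const)
qed

lemma iter_pdiff_add_const: "J \<noteq> [] \<Longrightarrow> iter_pdiff J (\<lambda>a. h a + c) = iter_pdiff J h"
  by (simp add: iter_pdiff_add_const_gen)

lemma prod_list_Phi:
  fixes \<gamma> :: "complex^'d::finite"
  shows "prod_list (map (\<lambda>j. - (exp (\<gamma>$j * L) * \<rho>)) I)
     = (-1) ^ length I * exp ((\<Sum>m\<leftarrow>I. \<gamma> $ m) * L) * \<rho> ^ length I"
proof (induction I)
  case Nil then show ?case by simp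
next
  case (Cons j I)
  show ?case unfolding list.map prod_list.Cons Cons.IH
    by (simp add: distrib_left distrib_right exp_add mult_ac)
qed

lemma has_fps_expansion_cong_ev:
  assumes "f has_fps_expansion F" "eventually (\<lambda>v. f v = g v) (nhds 0)"
  shows "g has_fps_expansion F"
  using assms unfolding has_fps_expansion_def by (auto elim: eventually_elim2)

lemma has_fps_expansion_power':
  fixes F :: "complex fps"
  assumes "f has_fps_expansion F"
  shows "(\<lambda>v. f v ^ n) has_fps_expansion F ^ n"
proof (induction n)
  case 0 then show ?case by simp
next
  case (Suc n)
  then show ?case using has_fps_expansion_mult[OF assms Suc] by simp
qed

lemma nonpos_Reals_one_plus: "norm (z::complex) < 1 \<Longrightarrow> 1 + z \<notin> \<real>\<^sub>\<le>\<^sub>0"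
proof
  assume z: "norm z < 1" and "1 + z \<in> \<real>\<^sub>\<le>\<^sub>0"
  then have "Re (1 + z) \<le> 0" by (simp add: complex_nonpos_Reals_iff)
  moreover have "\<bar>Re z\<bar> < 1" using abs_Re_le_cmod[of z] z by linarith
  ultimately show False by simp
qed

theorem theorem3p2:
  fixes \<gamma> :: "complex^'d::finite"
    and g :: "complex \<Rightarrow> complex"
    and \<alpha> :: complex
    and \<alpha>L :: Lpt
    and U :: "(complex^'d) set"
    and \<phi> :: "complex^'d \<Rightarrow> Lpt"
    and I :: "'d list"
  defines "c \<equiv> (\<lambda>k. (deriv ^^ k) g \<alpha> / of_nat (fact k))"
  assumes g_hol: "g holomorphic_on UNIV"
    and zero: "g \<alpha> = 0" and nz: "\<alpha> \<noteq> 0" and c1: "c 1 \<noteq> 0"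
    and \<alpha>L: "in_L \<alpha>L" "Lpow \<alpha>L 1 = \<alpha>"
    and U: "open U" "0 \<in> U"
    and \<phi>L: "\<forall>a\<in>U. in_L (\<phi> a)"
    and \<phi>_cont: "continuous_on U (\<lambda>a. Llog (\<phi> a))"
    and \<phi>_hol: "\<forall>a\<in>U. \<forall>i. (\<lambda>t. Llog (\<phi> (a + axis i t))) field_differentiable (at 0)"
    and root: "\<forall>a\<in>U. g (Lpow (\<phi> a) 1) + (\<Sum>i\<in>UNIV. a $ i * Lpow (\<phi> a) (\<gamma> $ i)) = 0"
    and \<phi>0: "\<phi> 0 = \<alpha>L"
    and I: "length I \<ge> 1"
  shows "iter_pdiff I (\<lambda>a. Lpow (\<phi> a) 1) 0
           = Ffun \<alpha>L c (\<Sum>m\<leftarrow>I. \<gamma> $ m) (length I - 1) 1"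
proof -
  define w0 where "w0 = Llog \<alpha>L"
  have \<alpha>w: "\<alpha> = exp w0" using \<alpha>L(2) by (simp add: Lpow_exp w0_def)
  define \<psi> where "\<psi> = (\<lambda>a. Llog (\<phi> a))"
  have \<psi>0: "\<psi> 0 = w0" by (simp add: \<psi>_def \<phi>0 w0_def)
  have \<psi>c: "continuous_on U \<psi>" using \<phi>_cont by (simp add: \<psi>_def)
  have Lp\<psi>: "\<And>a z. Lpow (\<phi> a) z = exp (z * \<psi> a)" by (simp add: Lpow_exp \<psi>_def)
  have c1d: "c 1 = deriv g \<alpha>" "c (Suc 0) = deriv g \<alpha>" by (simp_all add: c_def)
  have c1': "c (Suc 0) \<noteq> 0" using c1 by simp
  define Gq where "Gq = (\<lambda>v. if v = 0 then c 1 else g (\<alpha> + v) / v)"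
  have Gq_hol: "Gq holomorphic_on UNIV"
  proof -
    have h: "(\<lambda>z. if z = \<alpha> then deriv g \<alpha> else (g z - g \<alpha>) / (z - \<alpha>)) holomorphic_on UNIV"
      by (rule pole_lemma[OF g_hol]) simp
    have "(\<lambda>v. (\<lambda>z. if z = \<alpha> then deriv g \<alpha> else (g z - g \<alpha>) / (z - \<alpha>)) (\<alpha> + v)) holomorphic_on UNIV"
      by (rule holomorphic_on_compose_gen[OF _ h, unfolded o_def]) (auto intro!: holomorphic_intros)
    moreover have "(\<lambda>v. (\<lambda>z. if z = \<alpha> then deriv g \<alpha> else (g z - g \<alpha>) / (z - \<alpha>)) (\<alpha> + v)) = Gq"
      by (auto simp: Gq_def fun_eq_iff zero c1d)
    ultimately show ?thesis by simp
  qed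
  have gGq: "\<And>v. g (\<alpha> + v) = v * Gq v" by (auto simp: Gq_def zero)
  have Gq0: "Gq 0 \<noteq> 0" using c1 by (simp add: Gq_def)
  obtain r1 where r1: "r1 > 0" "\<And>v. norm v < r1 \<Longrightarrow> Gq v \<noteq> 0"
  proof -
    have "open {v\<in>UNIV. Gq v \<noteq> 0}" by (rule open_nz[OF open_UNIV Gq_hol])
    then obtain e where e: "e > 0" "ball 0 e \<subseteq> {v\<in>UNIV. Gq v \<noteq> 0}"
      using Gq0 by (auto simp: open_contains_ball)
    show ?thesis
    proof (rule that[of e])
      show "e > 0" by (rule e(1))
      fix v :: complex assume "norm v < e"
      then have "v \<in> ball 0 e" by simp
      with e(2) show "Gq v \<noteq> 0" by auto
    qed
  qed
  define R where "R = min r1 (norm \<alpha> / 2)"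
  have R: "R > 0" using r1 nz by (simp add: R_def)
  define B where "B = ball (0::complex) R"
  have Bo: "open B" by (simp add: B_def)
  have B_Gq: "\<And>v. v \<in> B \<Longrightarrow> Gq v \<noteq> 0" using r1 by (auto simp: B_def R_def)
  have B_small: "\<And>v. v \<in> B \<Longrightarrow> norm (v / \<alpha>) < 1"
  proof -
    fix v assume "v \<in> B"
    then have "norm v < norm \<alpha> / 2" by (simp add: B_def R_def)
    then have "norm v < norm \<alpha>" using norm_ge_zero[of v] by linarith
    then show "norm (v / \<alpha>) < 1" using nz by (simp add: norm_divide)
  qed
  define Lg where "Lg = (\<lambda>v. w0 + ln (1 + v / \<alpha>))"
  define \<rho> where "\<rho> = (\<lambda>v. inverse (Gq v))"
  define \<Phi> where "\<Phi> = (\<lambda>j v. - (exp (\<gamma>$j * Lg v) * \<rho> v))"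
  have Lg_hol: "Lg holomorphic_on B"
    unfolding Lg_def using B_small nonpos_Reals_one_plus by (auto intro!: holomorphic_intros)
  have \<rho>_hol: "\<rho> holomorphic_on B"
    unfolding \<rho>_def using B_Gq holomorphic_on_subset[OF Gq_hol] by (auto intro!: holomorphic_intros)
  have \<Phi>h: "\<forall>j. \<Phi> j holomorphic_on B"
    unfolding \<Phi>_def using Lg_hol \<rho>_hol by (auto intro!: holomorphic_intros)
  obtain \<delta> where \<delta>: "\<delta> > 0" "\<delta> \<le> 1" "\<And>w. dist w w0 < \<delta> \<Longrightarrow> dist (exp w) (exp w0) < R"
  proof -
    have "continuous (at w0) exp" by (rule isCont_exp)
    then obtain d where d: "d > 0" "\<And>w. dist w w0 < d \<Longrightarrow> dist (exp w) (exp w0) < R"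
      using R unfolding continuous_at_eps_delta by blast
    show ?thesis using d by (intro that[of "min d 1"]) auto
  qed
  define u where "u = (\<lambda>a. Lpow (\<phi> a) 1 - \<alpha>)"
  have u\<psi>: "\<And>a. u a = exp (\<psi> a) - \<alpha>" by (simp add: u_def Lp\<psi>)
  define V1 where "V1 = U \<inter> \<psi> -` ball w0 \<delta>"
  have V1o: "open V1" unfolding V1_def by (rule continuous_open_preimage[OF \<psi>c U(1)]) simp
  have V1U: "V1 \<subseteq> U" by (auto simp: V1_def)
  have uB1: "\<And>a. a \<in> V1 \<Longrightarrow> u a \<in> B"
  proof -
    fix a assume "a \<in> V1"
    then have "dist (\<psi> a) w0 < \<delta>" by (auto simp: V1_def dist_commute)
    then have "dist (exp (\<psi> a)) (exp w0) < R" by (rule \<delta>(3))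
    then show "u a \<in> B" by (simp add: u\<psi> B_def \<alpha>w dist_norm norm_minus_commute)
  qed
  have Lg_u: "\<And>a. a \<in> V1 \<Longrightarrow> Lg (u a) = \<psi> a"
  proof -
    fix a assume a: "a \<in> V1"
    then have d: "norm (\<psi> a - w0) < 1" using \<delta>(2) by (auto simp: V1_def dist_norm norm_minus_commute)
    have im: "\<bar>Im (\<psi> a - w0)\<bar> < pi"
      using abs_Im_le_cmod[of "\<psi> a - w0"] d pi_gt3 by linarith
    have "1 + u a / \<alpha> = exp (\<psi> a - w0)" using nz by (simp add: u\<psi> \<alpha>w exp_diff field_simps)
    then have "ln (1 + u a / \<alpha>) = \<psi> a - w0" using im by (simp add: abs_less_iff)
    then show "Lg (u a) = \<psi> a" by (simp add: Lg_def)
  qed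
  have u_cont: "continuous_on V1 u"
    unfolding u\<psi> using continuous_on_subset[OF \<psi>c V1U] by (auto intro!: continuous_intros)
  define Qf where "Qf = (\<lambda>a. 1 - (\<Sum>i\<in>UNIV. a$i * deriv (\<Phi> i) (u a)))"
  have Qf_cont: "continuous_on V1 Qf"
  proof -
    have "continuous_on V1 (\<lambda>a. deriv (\<Phi> i) (u a))" for i
    proof (rule continuous_on_compose2[OF _ u_cont])
      show "continuous_on B (deriv (\<Phi> i))"
        using \<Phi>h Bo by (intro holomorphic_on_imp_continuous_on holomorphic_deriv) auto
    qed (use uB1 in auto)
    then show ?thesis unfolding Qf_def
      by (auto intro!: continuous_intros continuous_on_component continuous_on_id)
  qed
  define V where "V = V1 \<inter> Qf -` (-{0})"
  have Vo: "open V" unfolding V_def by (rule continuous_open_preimage[OF Qf_cont V1o]) (simp add: open_Compl)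
  have V0: "0 \<in> V" using U(2) \<delta>(1) by (simp add: V_def V1_def \<psi>0 Qf_def)
  have VV1: "V \<subseteq> V1" by (auto simp: V_def)
  interpret LS: LSetting V B \<Phi> u
  proof
    show "open V" by (rule Vo)
    show "open B" by (rule Bo)
    show "\<forall>j. \<Phi> j holomorphic_on B" by (rule \<Phi>h)
    show "\<forall>a\<in>V. u a \<in> B" using uB1 VV1 by auto
    show "\<forall>a\<in>V. 1 - (\<Sum>i\<in>UNIV. a$i * deriv (\<Phi> i) (u a)) \<noteq> 0" by (auto simp: V_def Qf_def)
    show "\<forall>a\<in>V. u a = (\<Sum>i\<in>UNIV. a$i * \<Phi> i (u a))"
    proof
      fix a assume aV: "a \<in> V"
      then have a1: "a \<in> V1" and aU: "a \<in> U" using VV1 V1U by auto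
      have uB: "u a \<in> B" using uB1[OF a1] .
      have "g (Lpow (\<phi> a) 1) + (\<Sum>i\<in>UNIV. a $ i * Lpow (\<phi> a) (\<gamma> $ i)) = 0" using root aU by blast
      then have "u a * Gq (u a) + (\<Sum>i\<in>UNIV. a $ i * exp (\<gamma> $ i * Lg (u a))) = 0"
        using Lg_u[OF a1] gGq[of "u a"] by (simp add: u_def Lp\<psi>)
      then have "u a = - (\<Sum>i\<in>UNIV. a $ i * exp (\<gamma> $ i * Lg (u a))) / Gq (u a)"
        using B_Gq[OF uB] by (simp add: field_simps add_eq_0_iff)
      also have "\<dots> = (\<Sum>i\<in>UNIV. a$i * \<Phi> i (u a))"
        using B_Gq[OF uB] by (simp add: \<Phi>_def \<rho>_def sum_divide_distrib sum_negf[symmetric] field_simps)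
      finally show "u a = (\<Sum>i\<in>UNIV. a$i * \<Phi> i (u a))" .
    qed
    show "\<forall>a\<in>V. \<forall>j. (\<lambda>s. u (a + axis j s)) field_differentiable (at 0)"
    proof (intro ballI allI)
      fix a j assume aV: "a \<in> V"
      then have aU: "a \<in> U" using VV1 V1U by auto
      obtain D where D: "((\<lambda>t. \<psi> (a + axis j t)) has_field_derivative D) (at 0)"
        using \<phi>_hol aU unfolding field_differentiable_def \<psi>_def by blast
      have "((\<lambda>s. exp (\<psi> (a + axis j s)) - \<alpha>) has_field_derivative exp (\<psi> (a + axis j 0)) * D - 0) (at 0)"
        by (intro DERIV_diff DERIV_const DERIV_chain2[OF DERIV_exp D])
      then show "(\<lambda>s. u (a + axis j s)) field_differentiable (at 0)"
        unfolding field_differentiable_def u\<psi> by blast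
    qed
  qed
  \<comment> \<open>apply the abstract Lagrange computation at 0\<close>
  obtain j J where IJ: "I = j # J" using I by (cases I) auto
  define N where "N = length I"
  define r where "r = length I - 1"
  have Nr: "N = Suc r" using IJ by (simp add: N_def r_def)
  have rJ: "r = length J" using IJ by (simp add: r_def)
  have u0: "u 0 = 0" by (simp add: u\<psi> \<psi>0 \<alpha>w)
  have Qa0: "LS.Qa 0 = (\<lambda>v. 1)" by (simp add: LS.Qa_def)
  have Dop1: "Dop (\<lambda>v. 1) = deriv" by (simp add: Dop_def fun_eq_iff)
  have main: "iter_pdiff I u 0 = (deriv ^^ r) (\<lambda>v. prod_list (map (\<lambda>j. \<Phi> j v) I)) 0"
    using LS.main_list[OF V0, of j J] unfolding Qa0 Dop1 u0 IJ rJ by simp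
  have lhs: "iter_pdiff I (\<lambda>a. Lpow (\<phi> a) 1) 0 = iter_pdiff I u 0"
  proof -
    have "(\<lambda>a. Lpow (\<phi> a) 1) = (\<lambda>a. u a + \<alpha>)" by (simp add: u_def)
    then show ?thesis using iter_pdiff_add_const[of I u \<alpha>] IJ by simp
  qed
  define xs where "xs = (\<Sum>m\<leftarrow>I. \<gamma> $ m)"
  have prodf: "(\<lambda>v. prod_list (map (\<lambda>j. \<Phi> j v) I)) = (\<lambda>v. (-1)^N * exp (xs * Lg v) * \<rho> v ^ N)"
    by (simp add: \<Phi>_def prod_list_Phi xs_def N_def)
  have fe: "fps_expansion g \<alpha> = Abs_fps c" by (simp add: fps_expansion_def c_def)
  have E1: "(\<lambda>v. g (\<alpha> + v)) has_fps_expansion Abs_fps c"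
  proof -
    have ho: "g holomorphic_on eball \<alpha> \<infinity>" using g_hol by simp
    have "fps_conv_radius (fps_expansion g \<alpha>) \<ge> \<infinity>" by (rule conv_radius_fps_expansion[OF ho])
    then have "fps_conv_radius (fps_expansion g \<alpha>) > 0" by simp
    moreover have "eventually (\<lambda>v. eval_fps (fps_expansion g \<alpha>) v = g (\<alpha> + v)) (nhds 0)"
      using eval_fps_expansion'[OF ho] by simp
    ultimately show ?thesis unfolding has_fps_expansion_def fe by simp
  qed
  have sd: "1 \<le> subdegree (Abs_fps c)"
  proof (rule subdegree_geI)
    show "Abs_fps c \<noteq> 0" using c1 by (auto simp: fps_eq_iff)
    show "\<And>i. i < 1 \<Longrightarrow> Abs_fps c $ i = 0" using zero by (simp add: c_def)
  qed
  have E2: "Gq has_fps_expansion fps_shift 1 (Abs_fps c)"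
  proof -
    have e: "(\<lambda>x. if x = 0 then c 1 else (\<lambda>v. g (\<alpha> + v)) x / x ^ 1) = Gq"
      by (rule ext) (simp add: Gq_def)
    have "(\<lambda>x. if x = 0 then c 1 else (\<lambda>v. g (\<alpha> + v)) x / x ^ 1) has_fps_expansion fps_shift 1 (Abs_fps c)"
      by (rule has_fps_expansion_shift[OF E1 sd]) simp
    then show ?thesis unfolding e .
  qed
  have E3: "\<rho> has_fps_expansion inverse (fps_shift 1 (Abs_fps c))"
    unfolding \<rho>_def by (rule has_fps_expansion_inverse[OF E2]) (simp add: c1 c1')
  have E4: "(\<lambda>v. \<rho> v ^ N) has_fps_expansion inverse (fps_shift 1 (Abs_fps c)) ^ N"
    by (rule has_fps_expansion_power'[OF E3])
  define b where "b = inverse \<alpha>"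
  define Bf where "Bf = Abs_fps (\<lambda>n. (xs gchoose n) * b ^ n)"
  have E5: "(\<lambda>v. (1 + v / \<alpha>) powr xs) has_fps_expansion Bf"
  proof (rule has_fps_expansionI)
    have "eventually (\<lambda>v. v \<in> ball 0 (norm \<alpha>)) (nhds (0::complex))"
      using nz by (intro eventually_nhds_in_open) auto
    then show "eventually (\<lambda>v. (\<lambda>n. Bf $ n * v ^ n) sums (1 + v / \<alpha>) powr xs) (nhds 0)"
    proof eventually_elim
      case (elim v)
      then have "norm (v / \<alpha>) < 1" using nz by (simp add: norm_divide field_simps)
      from gen_binomial_complex[OF this, of xs]
      show ?case by (simp add: Bf_def b_def power_divide divide_inverse mult_ac power_inverse power_mult_distrib)
    qed
  qed
  define K where "K = (-1)^N * Lpow \<alpha>L xs"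
  define F where "F = fps_const K * (Bf * inverse (fps_shift 1 (Abs_fps c)) ^ N)"
  have E6: "(\<lambda>v. (-1)^N * exp (xs * Lg v) * \<rho> v ^ N) has_fps_expansion F"
  proof (rule has_fps_expansion_cong_ev)
    show "(\<lambda>v. K * ((1 + v / \<alpha>) powr xs * \<rho> v ^ N)) has_fps_expansion F"
      unfolding F_def by (intro has_fps_expansion_cmult_left has_fps_expansion_mult E5 E4)
    have "eventually (\<lambda>v. v \<in> B) (nhds (0::complex))"
      using Bo R by (intro eventually_nhds_in_open) (auto simp: B_def)
    then show "eventually (\<lambda>v. K * ((1 + v / \<alpha>) powr xs * \<rho> v ^ N) = (-1)^N * exp (xs * Lg v) * \<rho> v ^ N) (nhds 0)"
    proof eventually_elim
      case (elim v)
      have ne: "1 + v / \<alpha> \<noteq> 0" using B_small[OF elim] by (auto simp: add_eq_0_iff norm_minus_cancel)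
      have "exp (xs * Lg v) = Lpow \<alpha>L xs * (1 + v / \<alpha>) powr xs"
        using ne by (simp add: Lg_def powr_def Lpow_exp w0_def distrib_left exp_add)
      then show ?case by (simp add: K_def mult_ac)
    qed
  qed
  have der: "(deriv ^^ r) (\<lambda>v. (-1)^N * exp (xs * Lg v) * \<rho> v ^ N) 0 = fact r * F $ r"
    using fps_nth_fps_expansion[OF E6, of r] by (simp add: field_simps)
  have Fr: "F $ r = K * (\<Sum>i\<le>r. (xs gchoose i) * b^i * (inverse (fps_shift 1 (Abs_fps c)) ^ Suc r) $ (r - i))"
  proof -
    define H where "H = inverse (fps_shift 1 (Abs_fps c)) ^ Suc r"
    have "F $ r = K * ((Bf * H) $ r)" unfolding F_def H_def Nr by (rule fps_mult_left_const_nth)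
    also have "(Bf * H) $ r = (\<Sum>i=0..r. Bf $ i * H $ (r - i))" by (rule fps_mult_nth)
    also have "\<dots> = (\<Sum>i\<le>r. (xs gchoose i) * b^i * H $ (r - i))"
      by (simp only: atLeast0AtMost Bf_def fps_nth_Abs_fps)
    finally show ?thesis by (simp only: H_def)
  qed
  have Lp: "\<forall>n::nat. Lpow \<alpha>L (- of_nat n) = b ^ n"
    by (simp add: Lpow_exp b_def \<alpha>w w0_def exp_minus exp_of_nat_mult power_inverse)
  have "iter_pdiff I (\<lambda>a. Lpow (\<phi> a) 1) 0 = fact r * (K * (\<Sum>A\<in>MSall r. (-1)^size A * (xs gchoose (r - sum_mset A)) * b^(r - sum_mset A)
        * fact (r + size A) / (fact r * c 1 ^ (r + 1 + size A))
        * prod_mset (image_mset (\<lambda>x. c (Suc x)) A) / (\<Prod>x\<in>set_mset A. fact (count A x))))"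
    unfolding lhs main prodf der Fr core_rhs[of c, OF c1] ..
  also have "\<dots> = - Lpow \<alpha>L xs * (\<Sum>A\<in>MSall r. (-1)^(r - size A) * (xs gchoose (r - sum_mset A))
     * fact (r + size A) * b^(r - sum_mset A) / c 1 ^ (r + 1 + size A)
     * (\<Prod>j\<in>set_mset A. c (Suc j) ^ count A j / fact (count A j)))"
    unfolding K_def sum_distrib_left
  proof (rule sum.cong[OF refl])
    fix A assume A: "A \<in> MSall r"
    have sA: "size A \<le> r" using MSall_props[OF A] by simp
    have sg: "(-1::complex) ^ N = - ((-1) ^ (r - size A) * (-1) ^ size A)"
    proof -
      have "N = Suc ((r - size A) + size A)" using sA Nr by simp
      then show ?thesis by (simp only: power_Suc power_add) simp
    qed
    have pm: "prod_mset (image_mset (\<lambda>x. c (Suc x)) A) / (\<Prod>x\<in>set_mset A. fact (count A x))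
        = (\<Prod>j\<in>set_mset A. c (Suc j) ^ count A j / fact (count A j))"
      by (simp add: image_prod_mset_multiplicity prod_dividef)
    show "fact r * ((-1)^N * Lpow \<alpha>L xs * ((-1)^size A * (xs gchoose (r - sum_mset A)) * b^(r - sum_mset A)
        * fact (r + size A) / (fact r * c 1 ^ (r + 1 + size A))
        * prod_mset (image_mset (\<lambda>x. c (Suc x)) A) / (\<Prod>x\<in>set_mset A. fact (count A x))))
      = - Lpow \<alpha>L xs * ((-1)^(r - size A) * (xs gchoose (r - sum_mset A))
     * fact (r + size A) * b^(r - sum_mset A) / c 1 ^ (r + 1 + size A)
     * (\<Prod>j\<in>set_mset A. c (Suc j) ^ count A j / fact (count A j)))"
      unfolding pm[symmetric] sg by (simp add: field_simps minus_one_mult_self left_minus_one_mult_self)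
  qed
  also have "\<dots> = Ffun \<alpha>L c xs r 1" by (rule Ffun_eq[OF Lp, symmetric])
  finally show ?thesis by (simp add: xs_def r_def)
qed

end
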